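(* Let $\cdot:H\otimes B\to B$ be a symmetric partial action of $H$ on a unital algebra $B$, and let $\overline B$ be its globalization (the standard dilation of $B$). Then the standard dilation of the partial $H$-module $\underline{B\# H}$ is isomorphic, as a left $H$-module, to a direct summand of the smash product $\overline B\# H$. Here $\overline B\# H$ is regarded as a left $H$-module via $h\triangleright(f\# k)=(h_{(1)}\triangleright f)\# h_{(2)}k$.
   Context: Throughout, $k$ is a field and $H$ is a Hopf algebra over $k$ with bijective antipode $S$ and Sweedler notation $\Delta(h)=h_{(1)}\otimes h_{(2)}$. A symmetric partial action of $H$ on a unital algebra $B$ is a linear map $h\otimes b\mapsto h\cdot b$ such that for all $h,k\in H$, $a,b\in B$: - $1_H\cdot a=a$; - $h\cdot(ab)=(h_{(1)}\cdot a)(h_{(2)}\cdot b)$; - $h\cdot(k\cdot a)=(h_{(1)}\cdot1_B)(h_{(2)}k\cdot a)$; - $h\cdot(k\cdot a)=(h_{(1)}k\cdot a)(h_{(2)}\cdot1_B)$. A partial $H$-module is a vector space $M$ with linear $\pi:H\to\mathrm{End}_k(M)$ satisfying, for all $h,k$: - $\pi(1_H)=\mathrm{id}$; - $\pi(h)\pi(k_{(1)})\pi(S(k_{(2)}))=\pi(hk_{(1)})\pi(S(k_{(2)}))$; - $\pi(h_{(1)})\pi(S(h_{(2)}))\pi(k)=\pi(h_{(1)})\pi(S(h_{(2)})k)$; - $\pi(h)\pi(S(k_{(1)}))\pi(k_{(2)})=\pi(hS(k_{(1)}))\pi(k_{(2)})$; - $\pi(S(h_{(1)}))\pi(h_{(2)})\pi(k)=\pi(S(h_{(1)}))\pi(h_{(2)}k)$.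 Standard dilation of $(M,\pi)$: $\operatorname{Hom}_k(H,M)$ is a left $H$-module via $(h\triangleright f)(k)=f(kh)$, $\varphi(m)(h)=\pi(h)(m)$, and $\overline M=H\triangleright\varphi(M)$ is the $H$-submodule generated by $\varphi(M)$. For $M=B$ with $\pi(h)(b)=h\cdot b$, this gives $\overline B$, an $H$-module algebra under convolution $(f*g)(k)=f(k_{(1)})g(k_{(2)})$. $B\otimes H$ is a partial $H$-module via $h\cdot(b\otimes k)=(h_{(1)}\cdot b)\otimes h_{(2)}k$. The partial smash product $\underline{B\# H}$ is the subspace of $B\otimes H$ spanned by $b\# h:=b(h_{(1)}\cdot1_B)\otimes h_{(2)}$. It is a partial $H$-submodule (in fact a direct summand) of $B\otimes H$. $\overline B\# H$ denotes $\overline B\otimes H$ with product $(f\# h)(g\# k)=f*(h_{(1)}\triangleright g)\# h_{(2)}k$. *)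

theory Defs
  imports Complex_Main "HOL-Library.Poly_Mapping" "HOL-Library.Function_Algebras"
begin

(* 
The Hopf algebra H is represented as the free k-vector space on a basis
index type 'i, i.e. as finitely supported functions 'i \<Rightarrow>\<^sub>0 'k (every vector space over a
field has a basis).  Tensor products with H are then represented concretely:
  H \<otimes> H  = ('i \<times> 'i) \<Rightarrow>\<^sub>0 'k,   H \<otimes> H \<otimes> H = ('i \<times> 'i \<times> 'i) \<Rightarrow>\<^sub>0 'k,
  M \<otimes> H  = 'i \<Rightarrow>\<^sub>0 M   (finitely supported families indexed by the basis),
  Hom_k(H, M) = 'i \<Rightarrow> M (a linear map is determined by its values on the basis).
 *)

type_synonym ('i,'k) hvec = "'i \<Rightarrow>\<^sub>0 'k"

definition bas :: "'i \<Rightarrow> ('i \<Rightarrow>\<^sub>0 'k::zero_neq_one)" where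
  "bas i = Poly_Mapping.single i 1"

definition pms :: "('k \<Rightarrow> 'm \<Rightarrow> 'm) \<Rightarrow> 'k \<Rightarrow> ('i \<Rightarrow>\<^sub>0 'm::zero) \<Rightarrow> ('i \<Rightarrow>\<^sub>0 'm)" where
  "pms sc c p = Poly_Mapping.map (sc c) p"

definition hsc :: "'k \<Rightarrow> ('i \<Rightarrow>\<^sub>0 'k::field) \<Rightarrow> ('i \<Rightarrow>\<^sub>0 'k)" where
  "hsc = pms (*)"

definition fsc :: "('k \<Rightarrow> 'm \<Rightarrow> 'm) \<Rightarrow> 'k \<Rightarrow> ('i \<Rightarrow> 'm) \<Rightarrow> ('i \<Rightarrow> 'm)" where
  "fsc sc c f = (\<lambda>a. sc c (f a))"

definition tensor2 :: "('p \<Rightarrow>\<^sub>0 'k::field) \<Rightarrow> ('q \<Rightarrow>\<^sub>0 'k) \<Rightarrow> ('p \<times> 'q) \<Rightarrow>\<^sub>0 'k" where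
  "tensor2 x y = (\<Sum>i\<in>Poly_Mapping.keys x. \<Sum>j\<in>Poly_Mapping.keys y. Poly_Mapping.single (i, j) (Poly_Mapping.lookup x i * Poly_Mapping.lookup y j))"

definition tensor3 :: "('p \<Rightarrow>\<^sub>0 'k::field) \<Rightarrow> ('q \<Rightarrow>\<^sub>0 'k) \<Rightarrow> ('r \<Rightarrow>\<^sub>0 'k)
    \<Rightarrow> ('p \<times> 'q \<times> 'r) \<Rightarrow>\<^sub>0 'k" where
  "tensor3 x y z = (\<Sum>i\<in>Poly_Mapping.keys x. \<Sum>j\<in>Poly_Mapping.keys y. \<Sum>l\<in>Poly_Mapping.keys z.
      Poly_Mapping.single (i, j, l) (Poly_Mapping.lookup x i * Poly_Mapping.lookup y j * Poly_Mapping.lookup z l))"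

(* m \<otimes> h \<in> M \<otimes> H, represented in 'i \<Rightarrow>\<^sub>0 M *)
definition mtens :: "('k \<Rightarrow> 'm \<Rightarrow> 'm) \<Rightarrow> 'm \<Rightarrow> ('i \<Rightarrow>\<^sub>0 'k::field) \<Rightarrow> ('i \<Rightarrow>\<^sub>0 'm::comm_monoid_add)" where
  "mtens sc m h = (\<Sum>a\<in>Poly_Mapping.keys h. Poly_Mapping.single a (sc (Poly_Mapping.lookup h a) m))"

(* Sweedler sums: for t = \<Sum> t_1 \<otimes> t_2 in H \<otimes> H and F bilinear,
  sw sc t F = \<Sum> F t_1 t_2  (F applied to basis tensors, extended linearly) *)
definition sw :: "('k \<Rightarrow> 'v \<Rightarrow> 'v) \<Rightarrow> (('i \<times> 'i) \<Rightarrow>\<^sub>0 'k::field)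
    \<Rightarrow> (('i \<Rightarrow>\<^sub>0 'k) \<Rightarrow> ('i \<Rightarrow>\<^sub>0 'k) \<Rightarrow> 'v) \<Rightarrow> 'v::comm_monoid_add" where
  "sw sc t F = (\<Sum>p\<in>Poly_Mapping.keys t. sc (Poly_Mapping.lookup t p) (F (bas (fst p)) (bas (snd p))))"

definition bilinear_k :: "('k::field \<Rightarrow> 'a \<Rightarrow> 'a) \<Rightarrow> ('k \<Rightarrow> 'b \<Rightarrow> 'b) \<Rightarrow> ('k \<Rightarrow> 'c \<Rightarrow> 'c)
    \<Rightarrow> ('a::ab_group_add \<Rightarrow> 'b::ab_group_add \<Rightarrow> 'c::ab_group_add) \<Rightarrow> bool" where
  "bilinear_k s1 s2 s3 F \<longleftrightarrow> (\<forall>x. Vector_Spaces.linear s2 s3 (F x)) \<and> (\<forall>y. Vector_Spaces.linear s1 s3 (\<lambda>x. F x y))"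

definition hopf_algebra ::
  "(('i \<Rightarrow>\<^sub>0 'k) \<Rightarrow> ('i \<Rightarrow>\<^sub>0 'k) \<Rightarrow> ('i \<Rightarrow>\<^sub>0 'k)) \<Rightarrow> ('i \<Rightarrow>\<^sub>0 'k)
   \<Rightarrow> (('i \<Rightarrow>\<^sub>0 'k) \<Rightarrow> ('i \<times> 'i) \<Rightarrow>\<^sub>0 'k) \<Rightarrow> (('i \<Rightarrow>\<^sub>0 'k) \<Rightarrow> 'k::field)
   \<Rightarrow> (('i \<Rightarrow>\<^sub>0 'k) \<Rightarrow> ('i \<Rightarrow>\<^sub>0 'k)) \<Rightarrow> bool" where
  "hopf_algebra mul one comul eps S \<longleftrightarrow>
     \<comment> \<open>algebra\<close>
     bilinear_k hsc hsc hsc mul \<and>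
     (\<forall>x y z. mul (mul x y) z = mul x (mul y z)) \<and>
     (\<forall>x. mul one x = x \<and> mul x one = x) \<and>
     \<comment> \<open>coalgebra\<close>
     Vector_Spaces.linear hsc hsc comul \<and>
     Vector_Spaces.linear hsc (*) eps \<and>
     (\<forall>h. sw hsc (comul h) (\<lambda>x y. sw hsc (comul x) (\<lambda>u v. tensor3 u v y))
          = sw hsc (comul h) (\<lambda>x y. sw hsc (comul y) (\<lambda>u v. tensor3 x u v))) \<and>
     (\<forall>h. sw hsc (comul h) (\<lambda>x y. hsc (eps x) y) = h \<and> sw hsc (comul h) (\<lambda>x y. hsc (eps y) x) = h) \<and>
     \<comment> \<open>bialgebra\<close>
     (\<forall>h k. comul (mul h k) = sw hsc (comul h) (\<lambda>a b. sw hsc (comul k) (\<lambda>c d. tensor2 (mul a c) (mul b d)))) \<and>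
     comul one = tensor2 one one \<and>
     (\<forall>h k. eps (mul h k) = eps h * eps k) \<and> eps one = 1 \<and>
     \<comment> \<open>antipode, bijective\<close>
     Vector_Spaces.linear hsc hsc S \<and>
     (\<forall>h. sw hsc (comul h) (\<lambda>a b. mul (S a) b) = hsc (eps h) one \<and>
          sw hsc (comul h) (\<lambda>a b. mul a (S b)) = hsc (eps h) one) \<and>
     bij S"

definition k_algebra :: "('k::field \<Rightarrow> 'B::ring_1 \<Rightarrow> 'B) \<Rightarrow> bool" where
  "k_algebra sB \<longleftrightarrow> vector_space sB \<and> (\<forall>c x y. sB c (x * y) = sB c x * y \<and> sB c (x * y) = x * sB c y)"

definition sym_partial_action ::
  "(('i \<Rightarrow>\<^sub>0 'k) \<Rightarrow> ('i \<Rightarrow>\<^sub>0 'k) \<Rightarrow> ('i \<Rightarrow>\<^sub>0 'k)) \<Rightarrow> ('i \<Rightarrow>\<^sub>0 'k)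
   \<Rightarrow> (('i \<Rightarrow>\<^sub>0 'k) \<Rightarrow> ('i \<times> 'i) \<Rightarrow>\<^sub>0 'k) \<Rightarrow> ('k::field \<Rightarrow> 'B::ring_1 \<Rightarrow> 'B)
   \<Rightarrow> (('i \<Rightarrow>\<^sub>0 'k) \<Rightarrow> 'B \<Rightarrow> 'B) \<Rightarrow> bool" where
  "sym_partial_action mul one comul sB act \<longleftrightarrow>
     bilinear_k hsc sB sB act \<and>
     (\<forall>a. act one a = a) \<and>
     (\<forall>h a b. act h (a * b) = sw sB (comul h) (\<lambda>x y. act x a * act y b)) \<and>
     (\<forall>h k a. act h (act k a) = sw sB (comul h) (\<lambda>x y. act x 1 * act (mul y k) a)) \<and>
     (\<forall>h k a. act h (act k a) = sw sB (comul h) (\<lambda>x y. act (mul x k) a * act y 1))"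

definition hom_ev :: "('k \<Rightarrow> 'm \<Rightarrow> 'm) \<Rightarrow> ('i \<Rightarrow> 'm) \<Rightarrow> ('i \<Rightarrow>\<^sub>0 'k::field) \<Rightarrow> 'm::comm_monoid_add" where
  "hom_ev sc f k = (\<Sum>a\<in>Poly_Mapping.keys k. sc (Poly_Mapping.lookup k a) (f a))"

definition hom_act :: "(('i \<Rightarrow>\<^sub>0 'k) \<Rightarrow> ('i \<Rightarrow>\<^sub>0 'k) \<Rightarrow> ('i \<Rightarrow>\<^sub>0 'k)) \<Rightarrow> ('k::field \<Rightarrow> 'm \<Rightarrow> 'm)
    \<Rightarrow> ('i \<Rightarrow>\<^sub>0 'k) \<Rightarrow> ('i \<Rightarrow> 'm) \<Rightarrow> ('i \<Rightarrow> 'm::comm_monoid_add)" where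
  "hom_act mul sc h f = (\<lambda>a. hom_ev sc f (mul (bas a) h))"

definition dil_phi :: "(('i \<Rightarrow>\<^sub>0 'k::field) \<Rightarrow> 'm \<Rightarrow> 'm) \<Rightarrow> 'm \<Rightarrow> ('i \<Rightarrow> 'm)" where
  "dil_phi \<pi> m = (\<lambda>a. \<pi> (bas a) m)"

definition std_dilation :: "(('i \<Rightarrow>\<^sub>0 'k) \<Rightarrow> ('i \<Rightarrow>\<^sub>0 'k) \<Rightarrow> ('i \<Rightarrow>\<^sub>0 'k)) \<Rightarrow> ('k::field \<Rightarrow> 'm \<Rightarrow> 'm)
    \<Rightarrow> (('i \<Rightarrow>\<^sub>0 'k) \<Rightarrow> 'm \<Rightarrow> 'm) \<Rightarrow> 'm set \<Rightarrow> ('i \<Rightarrow> 'm::ab_group_add) set" where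
  "std_dilation mul sc \<pi> M = module.span (fsc sc) {hom_act mul sc h (dil_phi \<pi> m) | h m. m \<in> M}"

(* partial H-module structure on B \<otimes> H: h\<cdot>(b \<otimes> k) = (h_1\<cdot>b) \<otimes> h_2 k *)
definition BH_pi :: "(('i \<Rightarrow>\<^sub>0 'k) \<Rightarrow> ('i \<Rightarrow>\<^sub>0 'k) \<Rightarrow> ('i \<Rightarrow>\<^sub>0 'k))
    \<Rightarrow> (('i \<Rightarrow>\<^sub>0 'k) \<Rightarrow> ('i \<times> 'i) \<Rightarrow>\<^sub>0 'k) \<Rightarrow> ('k::field \<Rightarrow> 'B::ring_1 \<Rightarrow> 'B)
    \<Rightarrow> (('i \<Rightarrow>\<^sub>0 'k) \<Rightarrow> 'B \<Rightarrow> 'B) \<Rightarrow> ('i \<Rightarrow>\<^sub>0 'k) \<Rightarrow> ('i \<Rightarrow>\<^sub>0 'B) \<Rightarrow> ('i \<Rightarrow>\<^sub>0 'B)" where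
  "BH_pi mul comul sB act h t =
     (\<Sum>a\<in>Poly_Mapping.keys t. sw (pms sB) (comul h) (\<lambda>x y. mtens sB (act x (Poly_Mapping.lookup t a)) (mul y (bas a))))"

(* b # h = b (h_1 \<cdot> 1) \<otimes> h_2 *)
definition psmash_elt :: "(('i \<Rightarrow>\<^sub>0 'k) \<Rightarrow> ('i \<times> 'i) \<Rightarrow>\<^sub>0 'k) \<Rightarrow> ('k::field \<Rightarrow> 'B::ring_1 \<Rightarrow> 'B)
    \<Rightarrow> (('i \<Rightarrow>\<^sub>0 'k) \<Rightarrow> 'B \<Rightarrow> 'B) \<Rightarrow> 'B \<Rightarrow> ('i \<Rightarrow>\<^sub>0 'k) \<Rightarrow> ('i \<Rightarrow>\<^sub>0 'B)" where
  "psmash_elt comul sB act b h = sw (pms sB) (comul h) (\<lambda>x y. mtens sB (b * act x 1) y)"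

definition psmash :: "(('i \<Rightarrow>\<^sub>0 'k) \<Rightarrow> ('i \<times> 'i) \<Rightarrow>\<^sub>0 'k) \<Rightarrow> ('k::field \<Rightarrow> 'B::ring_1 \<Rightarrow> 'B)
    \<Rightarrow> (('i \<Rightarrow>\<^sub>0 'k) \<Rightarrow> 'B \<Rightarrow> 'B) \<Rightarrow> ('i \<Rightarrow>\<^sub>0 'B) set" where
  "psmash comul sB act = module.span (pms sB) {psmash_elt comul sB act b h | b h. True}"

definition globB :: "(('i \<Rightarrow>\<^sub>0 'k) \<Rightarrow> ('i \<Rightarrow>\<^sub>0 'k) \<Rightarrow> ('i \<Rightarrow>\<^sub>0 'k)) \<Rightarrow> ('k::field \<Rightarrow> 'B::ring_1 \<Rightarrow> 'B)
    \<Rightarrow> (('i \<Rightarrow>\<^sub>0 'k) \<Rightarrow> 'B \<Rightarrow> 'B) \<Rightarrow> ('i \<Rightarrow> 'B) set" where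
  "globB mul sB act = std_dilation mul sB act UNIV"

(* \<overline>B # H = \<overline>B \<otimes> H \<subseteq> Hom_k(H,B) \<otimes> H = 'i \<Rightarrow>\<^sub>0 ('i \<Rightarrow> 'B) *)
definition smashB :: "(('i \<Rightarrow>\<^sub>0 'k) \<Rightarrow> ('i \<Rightarrow>\<^sub>0 'k) \<Rightarrow> ('i \<Rightarrow>\<^sub>0 'k)) \<Rightarrow> ('k::field \<Rightarrow> 'B::ring_1 \<Rightarrow> 'B)
    \<Rightarrow> (('i \<Rightarrow>\<^sub>0 'k) \<Rightarrow> 'B \<Rightarrow> 'B) \<Rightarrow> ('i \<Rightarrow>\<^sub>0 ('i \<Rightarrow> 'B)) set" where
  "smashB mul sB act = module.span (pms (fsc sB)) {mtens (fsc sB) f k | f k. f \<in> globB mul sB act}"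

definition smash_act :: "(('i \<Rightarrow>\<^sub>0 'k) \<Rightarrow> ('i \<Rightarrow>\<^sub>0 'k) \<Rightarrow> ('i \<Rightarrow>\<^sub>0 'k))
    \<Rightarrow> (('i \<Rightarrow>\<^sub>0 'k) \<Rightarrow> ('i \<times> 'i) \<Rightarrow>\<^sub>0 'k) \<Rightarrow> ('k::field \<Rightarrow> 'B::ring_1 \<Rightarrow> 'B)
    \<Rightarrow> ('i \<Rightarrow>\<^sub>0 'k) \<Rightarrow> ('i \<Rightarrow>\<^sub>0 ('i \<Rightarrow> 'B)) \<Rightarrow> ('i \<Rightarrow>\<^sub>0 ('i \<Rightarrow> 'B))" where
  "smash_act mul comul sB h t =
     (\<Sum>a\<in>Poly_Mapping.keys t. sw (pms (fsc sB)) (comul h)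
        (\<lambda>x y. mtens (fsc sB) (hom_act mul sB x (Poly_Mapping.lookup t a)) (mul y (bas a))))"

definition h_submodule :: "('k::field \<Rightarrow> 'v \<Rightarrow> 'v) \<Rightarrow> ('h \<Rightarrow> 'v \<Rightarrow> 'v) \<Rightarrow> 'v::ab_group_add set \<Rightarrow> bool" where
  "h_submodule sc hact N \<longleftrightarrow> module.subspace sc N \<and> (\<forall>h. \<forall>x\<in>N. hact h x \<in> N)"

end

theory Submission
  imports Defs
begin

lemma lookup_map0: "g 0 = 0 \<Longrightarrow> Poly_Mapping.lookup (Poly_Mapping.map g p) k = g (Poly_Mapping.lookup p k)"
  by transfer (auto simp: when_def)

lemma vs_zero_r: "vector_space sc \<Longrightarrow> sc a 0 = 0"
  by (simp add: module.scale_zero_right module_iff_vector_space)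
lemma vs_zero_l: "vector_space sc \<Longrightarrow> sc 0 x = 0"
  by (simp add: module.scale_zero_left module_iff_vector_space)
lemma vs_one: "vector_space sc \<Longrightarrow> sc 1 x = x"
  by (simp add: module.scale_one module_iff_vector_space)
lemma vs_add_r: "vector_space sc \<Longrightarrow> sc a (x + y) = sc a x + sc a y"
  by (simp add: module.scale_right_distrib module_iff_vector_space)
lemma vs_add_l: "vector_space sc \<Longrightarrow> sc (a + b) x = sc a x + sc b x"
  by (simp add: module.scale_left_distrib module_iff_vector_space)
lemma vs_scale: "vector_space sc \<Longrightarrow> sc a (sc b x) = sc (a * b) x"
  by (simp add: module.scale_scale module_iff_vector_space)
lemma vs_sum_r: "vector_space sc \<Longrightarrow> sc a (sum f A) = (\<Sum>x\<in>A. sc a (f x))"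
  by (simp add: module.scale_sum_right module_iff_vector_space)
lemma vs_sum_l: "vector_space sc \<Longrightarrow> sc (sum f A) x = (\<Sum>a\<in>A. sc (f a) x)"
  by (simp add: module.scale_sum_left module_iff_vector_space)
lemma vs_minus_r: "vector_space sc \<Longrightarrow> sc a (- x) = - sc a x"
  by (simp add: module.scale_minus_right module_iff_vector_space)
lemma vs_minus_l: "vector_space sc \<Longrightarrow> sc (- a) x = - sc a x"
  by (simp add: module.scale_minus_left module_iff_vector_space)
lemma vs_comm: "vector_space sc \<Longrightarrow> sc a (sc b x) = sc b (sc a x)"
  by (simp add: vs_scale mult.commute)

lemma lookup_pms: "vector_space sc \<Longrightarrow> Poly_Mapping.lookup (pms sc c p) k = sc c (Poly_Mapping.lookup p k)"
  unfolding pms_def by (rule lookup_map0) (simp add: vs_zero_r)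

lemma vs_pms: assumes "vector_space sc" shows "vector_space (pms sc)"
  unfolding vector_space_def
  by (intro conjI allI poly_mapping_eqI)
     (simp_all add: lookup_pms[OF assms] lookup_add vs_add_r[OF assms] vs_add_l[OF assms] vs_scale[OF assms] vs_one[OF assms])

lemma vs_fsc: assumes "vector_space sc" shows "vector_space (fsc sc)"
  unfolding vector_space_def
  by (intro conjI allI ext)
     (simp_all add: fsc_def vs_add_r[OF assms] vs_add_l[OF assms] vs_scale[OF assms] vs_one[OF assms])

lemma vs_mult: "vector_space ((*) :: 'k::field \<Rightarrow> 'k \<Rightarrow> 'k)"
  unfolding vector_space_def by (auto simp: algebra_simps)

lemma vs_hsc: "vector_space (hsc :: 'k::field \<Rightarrow> ('i \<Rightarrow>\<^sub>0 'k) \<Rightarrow> _)"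
  unfolding hsc_def by (rule vs_pms[OF vs_mult])

lemma lookup_hsc: "Poly_Mapping.lookup (hsc c p) k = c * Poly_Mapping.lookup p k"
  unfolding hsc_def by (rule lookup_pms[OF vs_mult])

lemma fsc_apply: "fsc sc c f a = sc c (f a)" by (simp add: fsc_def)

lemma lookup_bas: "Poly_Mapping.lookup (bas i) j = (if i = j then 1 else 0)"
  by (simp add: bas_def lookup_single)
lemma keys_bas[simp]: "Poly_Mapping.keys (bas i :: 'i \<Rightarrow>\<^sub>0 'k::zero_neq_one) = {i}"
  by (simp add: bas_def)

definition lin :: "('k \<Rightarrow> 'a \<Rightarrow> 'a) \<Rightarrow> ('k \<Rightarrow> 'b \<Rightarrow> 'b) \<Rightarrow> ('a::ab_group_add \<Rightarrow> 'b::ab_group_add) \<Rightarrow> bool" where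
  "lin s1 s2 L \<longleftrightarrow> (\<forall>x y. L (x + y) = L x + L y) \<and> (\<forall>c x. L (s1 c x) = s2 c (L x))"

lemma linI: "(\<And>x y. L (x + y) = L x + L y) \<Longrightarrow> (\<And>c x. L (s1 c x) = s2 c (L x)) \<Longrightarrow> lin s1 s2 L"
  by (auto simp: lin_def)
lemma lin_add: "lin s1 s2 L \<Longrightarrow> L (x + y) = L x + L y" by (auto simp: lin_def)
lemma lin_scale: "lin s1 s2 L \<Longrightarrow> L (s1 c x) = s2 c (L x)" by (auto simp: lin_def)
lemma lin_sum: "lin s1 s2 L \<Longrightarrow> L (sum f A) = (\<Sum>a\<in>A. L (f a))"
proof -
  assume "lin s1 s2 L"
  then interpret additive L by unfold_locales (simp add: lin_add)
  show ?thesis by (rule sum)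
qed
lemma lin_zero: "lin s1 s2 L \<Longrightarrow> L 0 = 0"
proof -
  assume "lin s1 s2 L"
  then interpret additive L by unfold_locales (simp add: lin_add)
  show ?thesis by (rule zero)
qed
lemma lin_minus: "lin s1 s2 L \<Longrightarrow> L (- x) = - L x"
proof -
  assume "lin s1 s2 L"
  then interpret additive L by unfold_locales (simp add: lin_add)
  show ?thesis by (rule minus)
qed
lemma lin_diff: "lin s1 s2 L \<Longrightarrow> L (x - y) = L x - L y"
proof -
  assume "lin s1 s2 L"
  then interpret additive L by unfold_locales (simp add: lin_add)
  show ?thesis by (rule diff)
qed

lemma linear_lin: "Vector_Spaces.linear s1 s2 L \<Longrightarrow> lin s1 s2 L"
  by (auto simp: Vector_Spaces.linear_iff lin_def)

lemma lin_comp: "lin s1 s2 L \<Longrightarrow> lin s2 s3 M \<Longrightarrow> lin s1 s3 (\<lambda>x. M (L x))"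
  by (auto simp: lin_def)

lemma sum_keys_ext:
  assumes "finite K" "Poly_Mapping.keys t \<subseteq> K" "\<And>p. G p 0 = 0"
  shows "(\<Sum>p\<in>Poly_Mapping.keys t. G p (Poly_Mapping.lookup t p)) = (\<Sum>p\<in>K. G p (Poly_Mapping.lookup t p))"
  using assms by (intro sum.mono_neutral_left) (auto simp: in_keys_iff)

lemma expand_H: "(x :: 'i \<Rightarrow>\<^sub>0 'k::field) = (\<Sum>i\<in>Poly_Mapping.keys x. hsc (Poly_Mapping.lookup x i) (bas i))"
proof (rule poly_mapping_eqI)
  fix k
  have "(\<Sum>i\<in>Poly_Mapping.keys x. Poly_Mapping.lookup (hsc (Poly_Mapping.lookup x i) (bas i)) k)
      = (\<Sum>i\<in>Poly_Mapping.keys x. (if i = k then Poly_Mapping.lookup x i else 0))"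
    by (rule sum.cong) (auto simp: lookup_hsc lookup_bas)
  also have "\<dots> = Poly_Mapping.lookup x k"
    by (simp add: sum.delta in_keys_iff)
  finally show "Poly_Mapping.lookup x k = Poly_Mapping.lookup (\<Sum>i\<in>Poly_Mapping.keys x. hsc (Poly_Mapping.lookup x i) (bas i)) k"
    by (simp add: lookup_sum)
qed

lemma lin_expand:
  assumes "lin hsc sc L"
  shows "L (x :: 'i \<Rightarrow>\<^sub>0 'k::field) = (\<Sum>i\<in>Poly_Mapping.keys x. sc (Poly_Mapping.lookup x i) (L (bas i)))"
proof -
  have "L x = L (\<Sum>i\<in>Poly_Mapping.keys x. hsc (Poly_Mapping.lookup x i) (bas i))"
    by (rule arg_cong[where f=L, OF expand_H])
  also have "\<dots> = (\<Sum>i\<in>Poly_Mapping.keys x. sc (Poly_Mapping.lookup x i) (L (bas i)))"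
    by (simp only: lin_sum[OF assms] lin_scale[OF assms])
  finally show ?thesis .
qed

lemma lin_eq_bas:
  assumes "lin hsc sc L" "lin hsc sc M" "\<And>i. L (bas i) = M (bas i)"
  shows "L (x :: 'i \<Rightarrow>\<^sub>0 'k::field) = M x"
  unfolding lin_expand[OF assms(1), of x] lin_expand[OF assms(2), of x] assms(3) ..

lemma sw_keys:
  assumes "vector_space sc" "finite K" "Poly_Mapping.keys t \<subseteq> K"
  shows "sw sc t F = (\<Sum>p\<in>K. sc (Poly_Mapping.lookup t p) (F (bas (fst p)) (bas (snd p))))"
  unfolding sw_def
  by (rule sum_keys_ext[OF assms(2,3), where G="\<lambda>p c. sc c (F (bas (fst p)) (bas (snd p)))"])
     (simp add: vs_zero_l[OF assms(1)])

lemma sw_add_t: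
  assumes "vector_space sc"
  shows "sw sc (t1 + t2) F = sw sc t1 F + sw sc t2 F"
proof -
  let ?K = "Poly_Mapping.keys t1 \<union> Poly_Mapping.keys t2"
  have f: "finite ?K" by simp
  have k: "Poly_Mapping.keys (t1 + t2) \<subseteq> ?K" by (rule keys_add)
  have k1: "Poly_Mapping.keys t1 \<subseteq> ?K" "Poly_Mapping.keys t2 \<subseteq> ?K" by auto
  show ?thesis
    unfolding sw_keys[OF assms f k] sw_keys[OF assms f k1(1)] sw_keys[OF assms f k1(2)]
    by (simp add: lookup_add vs_add_l[OF assms] sum.distrib)
qed

lemma sw_scale_t:
  assumes "vector_space sc"
  shows "sw sc (hsc c t) F = sc c (sw sc t F)"
proof -
  let ?K = "Poly_Mapping.keys t"
  have k: "Poly_Mapping.keys (hsc c t) \<subseteq> ?K" by (auto simp: in_keys_iff lookup_hsc)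
  show ?thesis
    unfolding sw_keys[OF assms finite_keys k] sw_keys[OF assms finite_keys order_refl, of t]
    by (simp add: lookup_hsc vs_scale[OF assms] vs_sum_r[OF assms])
qed

lemma lin_sw_t: "vector_space sc \<Longrightarrow> lin hsc sc (\<lambda>t. sw sc t F)"
  by (rule linI) (simp_all add: sw_add_t sw_scale_t)

lemma sw_zero_t: "sw sc 0 F = 0"
  by (simp add: sw_def)

lemma sw_linear: "lin s1 s2 L \<Longrightarrow> L (sw s1 t F) = sw s2 t (\<lambda>x y. L (F x y))"
  unfolding sw_def by (simp add: lin_sum lin_scale)

lemma sw_add_F: "vector_space sc \<Longrightarrow> sw sc t (\<lambda>x y. F x y + G x y) = sw sc t F + sw sc t G"
  unfolding sw_def by (simp add: vs_add_r sum.distrib)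

lemma sw_scale_F: "vector_space sc \<Longrightarrow> sw sc t (\<lambda>x y. sc c (F x y)) = sc c (sw sc t F)"
  unfolding sw_def by (simp add: vs_sum_r vs_comm)

lemma sw_zero_F: "vector_space sc \<Longrightarrow> sw sc t (\<lambda>x y. 0) = 0"
  unfolding sw_def by (simp add: vs_zero_r)

lemma sw_minus_F: "vector_space sc \<Longrightarrow> sw sc t (\<lambda>x y. - F x y) = - sw sc t F"
  unfolding sw_def by (simp add: vs_minus_r sum_negf)

lemma sw_cong: "(\<And>i j. F (bas i) (bas j) = G (bas i) (bas j)) \<Longrightarrow> sw sc t F = sw sc t G"
  unfolding sw_def by simp

lemma sw_swap:
  assumes "vector_space sc"
  shows "sw sc t (\<lambda>x y. sw sc u (\<lambda>z w. G x y z w)) = sw sc u (\<lambda>z w. sw sc t (\<lambda>x y. G x y z w))"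
  unfolding sw_def by (simp add: vs_sum_r[OF assms] vs_comm[OF assms] sum.swap[where A="Poly_Mapping.keys t"])

lemma sw_single:
  assumes "vector_space sc"
  shows "sw sc (Poly_Mapping.single p c) F = sc c (F (bas (fst p)) (bas (snd p)))"
proof -
  have k: "Poly_Mapping.keys (Poly_Mapping.single p c) \<subseteq> {p}" by simp
  have f: "finite {p}" by simp
  show ?thesis unfolding sw_keys[OF assms f k] by (simp add: lookup_single)
qed

lemma sw_sum_t: "vector_space sc \<Longrightarrow> sw sc (sum f A) F = (\<Sum>a\<in>A. sw sc (f a) F)"
  using lin_sum[OF lin_sw_t] by blast

lemma sw_tensor2:
  assumes vs: "vector_space sc" and l1: "\<And>x. lin hsc sc (F x)" and l2: "\<And>y. lin hsc sc (\<lambda>x. F x y)"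
  shows "sw sc (tensor2 x y) F = F x y"
proof -
  have "sw sc (tensor2 x y) F = (\<Sum>i\<in>Poly_Mapping.keys x. \<Sum>j\<in>Poly_Mapping.keys y.
      sc (Poly_Mapping.lookup x i * Poly_Mapping.lookup y j) (F (bas i) (bas j)))"
    unfolding tensor2_def by (simp add: sw_sum_t[OF vs] sw_single[OF vs])
  also have "\<dots> = (\<Sum>i\<in>Poly_Mapping.keys x. sc (Poly_Mapping.lookup x i) (F (bas i) y))"
    by (simp add: lin_expand[OF l1, of _ y] vs_sum_r[OF vs] vs_scale[OF vs])
  also have "\<dots> = F x y"
    by (rule lin_expand[OF l2, symmetric])
  finally show ?thesis .
qed

definition swg :: "('k \<Rightarrow> 'v \<Rightarrow> 'v) \<Rightarrow> ('p \<Rightarrow>\<^sub>0 'k::field) \<Rightarrow> ('p \<Rightarrow> 'v) \<Rightarrow> 'v::comm_monoid_add" where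
  "swg sc w G = (\<Sum>p\<in>Poly_Mapping.keys w. sc (Poly_Mapping.lookup w p) (G p))"

lemma swg_keys:
  assumes "vector_space sc" "finite K" "Poly_Mapping.keys t \<subseteq> K"
  shows "swg sc t G = (\<Sum>p\<in>K. sc (Poly_Mapping.lookup t p) (G p))"
  unfolding swg_def
  by (rule sum_keys_ext[OF assms(2,3), where G="\<lambda>p c. sc c (G p)"])
     (simp add: vs_zero_l[OF assms(1)])

lemma lin_swg: fixes sc :: "'k::field \<Rightarrow> 'v::ab_group_add \<Rightarrow> 'v" and G :: "'p \<Rightarrow> 'v"
  assumes "vector_space sc" shows "lin hsc sc (\<lambda>w. swg sc w G)"
proof (rule linI)
  fix t1 t2 :: "'p \<Rightarrow>\<^sub>0 'k"
  let ?K = "Poly_Mapping.keys t1 \<union> Poly_Mapping.keys t2"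
  have f: "finite ?K" by simp
  have k: "Poly_Mapping.keys (t1 + t2) \<subseteq> ?K" by (rule keys_add)
  have k1: "Poly_Mapping.keys t1 \<subseteq> ?K" "Poly_Mapping.keys t2 \<subseteq> ?K" by auto
  show "swg sc (t1 + t2) G = swg sc t1 G + swg sc t2 G"
    unfolding swg_keys[OF assms f k] swg_keys[OF assms f k1(1)] swg_keys[OF assms f k1(2)]
    by (simp add: lookup_add vs_add_l[OF assms] sum.distrib)
next
  fix c and t :: "'p \<Rightarrow>\<^sub>0 'k"
  have k: "Poly_Mapping.keys (hsc c t) \<subseteq> Poly_Mapping.keys t" by (auto simp: in_keys_iff lookup_hsc)
  show "swg sc (hsc c t) G = sc c (swg sc t G)"
    unfolding swg_keys[OF assms finite_keys k] swg_keys[OF assms finite_keys order_refl, of t]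
    by (simp add: lookup_hsc vs_scale[OF assms] vs_sum_r[OF assms])
qed

lemma swg_single:
  assumes "vector_space sc"
  shows "swg sc (Poly_Mapping.single p c) G = sc c (G p)"
proof -
  have k: "Poly_Mapping.keys (Poly_Mapping.single p c) \<subseteq> {p}" by simp
  have f: "finite {p}" by simp
  show ?thesis unfolding swg_keys[OF assms f k] by (simp add: lookup_single)
qed

lemma tensor3_bas: "tensor3 (bas i) (bas j) (bas l) = Poly_Mapping.single (i, j, l) (1::'k::field)"
  unfolding tensor3_def by (simp add: lookup_bas)

lemma tensor2_bas: "tensor2 (bas i) (bas j) = Poly_Mapping.single (i, j) (1::'k::field)"
  unfolding tensor2_def by (simp add: lookup_bas)

locale hopf =
  fixes mul :: "('i \<Rightarrow>\<^sub>0 'k::field) \<Rightarrow> ('i \<Rightarrow>\<^sub>0 'k) \<Rightarrow> ('i \<Rightarrow>\<^sub>0 'k)"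
    and one :: "'i \<Rightarrow>\<^sub>0 'k"
    and comul :: "('i \<Rightarrow>\<^sub>0 'k) \<Rightarrow> ('i \<times> 'i) \<Rightarrow>\<^sub>0 'k"
    and eps :: "('i \<Rightarrow>\<^sub>0 'k) \<Rightarrow> 'k"
    and S :: "('i \<Rightarrow>\<^sub>0 'k) \<Rightarrow> ('i \<Rightarrow>\<^sub>0 'k)"
  assumes hopf: "hopf_algebra mul one comul eps S"
begin

lemma mul_lin1: "lin hsc hsc (\<lambda>x. mul x y)"
  using hopf unfolding hopf_algebra_def bilinear_k_def by (auto intro: linear_lin)
lemma mul_lin2: "lin hsc hsc (mul x)"
  using hopf unfolding hopf_algebra_def bilinear_k_def by (auto intro: linear_lin)
lemma mul_assoc: "mul (mul x y) z = mul x (mul y z)"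
  using hopf unfolding hopf_algebra_def by auto
lemma mul_one_l[simp]: "mul one x = x"
  using hopf unfolding hopf_algebra_def by auto
lemma mul_one_r[simp]: "mul x one = x"
  using hopf unfolding hopf_algebra_def by auto
lemma comul_lin: "lin hsc hsc comul"
  using hopf unfolding hopf_algebra_def by (auto intro: linear_lin)
lemma eps_lin: "lin hsc (*) eps"
  using hopf unfolding hopf_algebra_def by (auto intro: linear_lin)
lemma coassoc_raw: "sw hsc (comul h) (\<lambda>x y. sw hsc (comul x) (\<lambda>u v. tensor3 u v y))
          = sw hsc (comul h) (\<lambda>x y. sw hsc (comul y) (\<lambda>u v. tensor3 x u v))"
  using hopf unfolding hopf_algebra_def by auto
lemma counit_raw: "sw hsc (comul h) (\<lambda>x y. hsc (eps x) y) = h" "sw hsc (comul h) (\<lambda>x y. hsc (eps y) x) = h"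
  using hopf unfolding hopf_algebra_def by auto
lemma comul_mul_raw: "comul (mul h k) = sw hsc (comul h) (\<lambda>a b. sw hsc (comul k) (\<lambda>c d. tensor2 (mul a c) (mul b d)))"
  using hopf unfolding hopf_algebra_def by auto
lemma comul_one_raw: "comul one = tensor2 one one"
  using hopf unfolding hopf_algebra_def by auto
lemma eps_mul: "eps (mul h k) = eps h * eps k"
  using hopf unfolding hopf_algebra_def by auto
lemma eps_one[simp]: "eps one = 1"
  using hopf unfolding hopf_algebra_def by auto
lemma S_lin: "lin hsc hsc S"
  using hopf unfolding hopf_algebra_def by (auto intro: linear_lin)
lemma antipode_raw: "sw hsc (comul h) (\<lambda>a b. mul (S a) b) = hsc (eps h) one"
   "sw hsc (comul h) (\<lambda>a b. mul a (S b)) = hsc (eps h) one"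
  using hopf unfolding hopf_algebra_def by auto
lemma bijS: "bij S"
  using hopf unfolding hopf_algebra_def by auto

lemma lin_sw_comul: "vector_space sc \<Longrightarrow> lin hsc sc (\<lambda>h. sw sc (comul h) F)"
  by (rule lin_comp[OF comul_lin lin_sw_t])

lemma coassoc:
  assumes vs: "vector_space sc"
  shows "sw sc (comul h) (\<lambda>x y. sw sc (comul x) (\<lambda>u v. G u v y))
       = sw sc (comul h) (\<lambda>x y. sw sc (comul y) (\<lambda>u v. G x u v))"
proof -
  let ?L = "\<lambda>w. swg sc w (\<lambda>p. G (bas (fst p)) (bas (fst (snd p))) (bas (snd (snd p))))"
  have L: "lin hsc sc ?L" by (rule lin_swg[OF vs])
  have t3: "?L (tensor3 (bas i) (bas j) (bas l)) = G (bas i) (bas j) (bas l)" for i j l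
    by (simp add: tensor3_bas swg_single[OF vs] vs_one[OF vs])
  have "?L (sw hsc (comul h) (\<lambda>x y. sw hsc (comul x) (\<lambda>u v. tensor3 u v y)))
      = ?L (sw hsc (comul h) (\<lambda>x y. sw hsc (comul y) (\<lambda>u v. tensor3 x u v)))"
    by (simp only: coassoc_raw)
  then have e: "sw sc (comul h) (\<lambda>x y. sw sc (comul x) (\<lambda>u v. ?L (tensor3 u v y)))
      = sw sc (comul h) (\<lambda>x y. sw sc (comul y) (\<lambda>u v. ?L (tensor3 x u v)))"
    by (simp only: sw_linear[OF L])
  have e1: "sw sc (comul h) (\<lambda>x y. sw sc (comul x) (\<lambda>u v. ?L (tensor3 u v y)))
      = sw sc (comul h) (\<lambda>x y. sw sc (comul x) (\<lambda>u v. G u v y))"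
    by (rule sw_cong, rule sw_cong, rule t3)
  have e2: "sw sc (comul h) (\<lambda>x y. sw sc (comul y) (\<lambda>u v. ?L (tensor3 x u v)))
      = sw sc (comul h) (\<lambda>x y. sw sc (comul y) (\<lambda>u v. G x u v))"
    by (rule sw_cong, rule sw_cong, rule t3)
  show ?thesis using e e1 e2 by simp
qed

lemma counit_l:
  assumes vs: "vector_space sc" and G: "lin hsc sc G"
  shows "sw sc (comul h) (\<lambda>x y. sc (eps x) (G y)) = G h"
proof -
  have "G h = G (sw hsc (comul h) (\<lambda>x y. hsc (eps x) y))" by (simp only: counit_raw)
  also have "\<dots> = sw sc (comul h) (\<lambda>x y. sc (eps x) (G y))"
    by (simp only: sw_linear[OF G] lin_scale[OF G])
  finally show ?thesis by simp
qed

lemma counit_r: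
  assumes vs: "vector_space sc" and G: "lin hsc sc G"
  shows "sw sc (comul h) (\<lambda>x y. sc (eps y) (G x)) = G h"
proof -
  have "G h = G (sw hsc (comul h) (\<lambda>x y. hsc (eps y) x))" by (simp only: counit_raw)
  also have "\<dots> = sw sc (comul h) (\<lambda>x y. sc (eps y) (G x))"
    by (simp only: sw_linear[OF G] lin_scale[OF G])
  finally show ?thesis by simp
qed

lemma comul_mul:
  assumes vs: "vector_space sc" and F1: "\<And>x. lin hsc sc (F x)" and F2: "\<And>y. lin hsc sc (\<lambda>x. F x y)"
  shows "sw sc (comul (mul h k)) F = sw sc (comul h) (\<lambda>a b. sw sc (comul k) (\<lambda>c d. F (mul a c) (mul b d)))"
proof -
  have L: "lin hsc sc (\<lambda>t. sw sc t F)" by (rule lin_sw_t[OF vs])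
  show ?thesis
    unfolding comul_mul_raw
    by (simp only: sw_linear[OF L] sw_tensor2[OF vs F1 F2])
qed

lemma comul_one:
  assumes vs: "vector_space sc" and F1: "\<And>x. lin hsc sc (F x)" and F2: "\<And>y. lin hsc sc (\<lambda>x. F x y)"
  shows "sw sc (comul one) F = F one one"
  unfolding comul_one_raw by (rule sw_tensor2[OF vs F1 F2])

lemma antipode_l:
  assumes vs: "vector_space sc" and G: "lin hsc sc G"
  shows "sw sc (comul h) (\<lambda>a b. G (mul (S a) b)) = sc (eps h) (G one)"
proof -
  have "sw sc (comul h) (\<lambda>a b. G (mul (S a) b)) = G (sw hsc (comul h) (\<lambda>a b. mul (S a) b))"
    by (simp only: sw_linear[OF G])
  also have "\<dots> = sc (eps h) (G one)" by (simp only: antipode_raw lin_scale[OF G])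
  finally show ?thesis .
qed

lemma antipode_r:
  assumes vs: "vector_space sc" and G: "lin hsc sc G"
  shows "sw sc (comul h) (\<lambda>a b. G (mul a (S b))) = sc (eps h) (G one)"
proof -
  have "sw sc (comul h) (\<lambda>a b. G (mul a (S b))) = G (sw hsc (comul h) (\<lambda>a b. mul a (S b)))"
    by (simp only: sw_linear[OF G])
  also have "\<dots> = sc (eps h) (G one)" by (simp only: antipode_raw lin_scale[OF G])
  finally show ?thesis .
qed

end

context hopf begin

lemma lin_idH: "lin s s (\<lambda>x. x)" by (simp add: lin_def)
lemma lin_mulL: "lin hsc hsc L \<Longrightarrow> lin hsc hsc (\<lambda>x. mul (L x) y)"
  using lin_comp[OF _ mul_lin1] by blast
lemma lin_mulR: "lin hsc hsc L \<Longrightarrow> lin hsc hsc (\<lambda>x. mul y (L x))"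
  using lin_comp[OF _ mul_lin2] by blast
lemma lin_SL: "lin hsc hsc L \<Longrightarrow> lin hsc hsc (\<lambda>x. S (L x))"
  using lin_comp[OF _ S_lin] by blast
lemma lin_swF: "vector_space sc \<Longrightarrow> (\<And>a b. lin s1 sc (\<lambda>x. F x a b)) \<Longrightarrow> lin s1 sc (\<lambda>x. sw sc t (\<lambda>a b. F x a b))"
  unfolding lin_def sw_def by (simp add: vs_add_r vs_comm sum.distrib vs_sum_r)
lemma lin_scF: "vector_space sc \<Longrightarrow> lin s1 sc L \<Longrightarrow> lin s1 sc (\<lambda>x. sc c (L x))"
  unfolding lin_def by (simp add: vs_add_r vs_comm)
lemma lin_epsc: "vector_space sc \<Longrightarrow> lin hsc sc (\<lambda>x. sc (eps x) v)"
  using eps_lin unfolding lin_def by (simp add: vs_add_l vs_scale)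
lemma lin_swc: "vector_space sc \<Longrightarrow> lin hsc hsc L \<Longrightarrow> lin hsc sc (\<lambda>x. sw sc (comul (L x)) F)"
  by (rule lin_comp[OF _ lin_sw_comul])

lemmas linH = lin_idH lin_mulL lin_mulR lin_SL lin_swF[OF vs_hsc] lin_scF[OF vs_hsc] lin_epsc[OF vs_hsc] lin_swc[OF vs_hsc]

lemma S_antimult: "S (mul x y) = mul (S y) (S x)"
proof -
  have A: "mul (S y) (S x) = sw hsc (comul x) (\<lambda>x1 x2. hsc (eps x2) (mul (S y) (S x1)))"
    by (rule counit_r[OF vs_hsc, of "\<lambda>x1. mul (S y) (S x1)", symmetric]) (intro linH)
  have B: "\<And>z. mul (S y) (S z) = sw hsc (comul y) (\<lambda>y1 y2. hsc (eps y2) (mul (S y1) (S z)))"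
    by (rule counit_r[OF vs_hsc, of "\<lambda>y1. mul (S y1) (S z)" for z, symmetric]) (intro linH)
  have C: "\<And>M w. hsc (eps w) M = sw hsc (comul w) (\<lambda>a b. mul M (mul a (S b)))"
  proof -
    fix M w
    have "sw hsc (comul w) (\<lambda>a b. mul M (mul a (S b))) = hsc (eps w) (mul M one)"
      by (rule antipode_r[OF vs_hsc, of "mul M"]) (intro linH)
    then show "hsc (eps w) M = sw hsc (comul w) (\<lambda>a b. mul M (mul a (S b)))" by simp
  qed
  have D: "\<And>M p q. sw hsc (comul (mul p q)) (\<lambda>a b. mul M (mul a (S b)))
     = sw hsc (comul p) (\<lambda>a b. sw hsc (comul q) (\<lambda>c d. mul M (mul (mul a c) (S (mul b d)))))"
    by (rule comul_mul[OF vs_hsc]) (intro linH)+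
  have "mul (S y) (S x) = sw hsc (comul x) (\<lambda>x1 x2. hsc (eps x2) (mul (S y) (S x1)))" by (rule A)
  also have "\<dots> = sw hsc (comul x) (\<lambda>x1 x2. sw hsc (comul y) (\<lambda>y1 y2. hsc (eps (mul x2 y2)) (mul (S y1) (S x1))))"
    by (simp only: B sw_scale_F[OF vs_hsc, symmetric] vs_scale[OF vs_hsc] eps_mul)
  also have "\<dots> = sw hsc (comul x) (\<lambda>x1 x2. sw hsc (comul y) (\<lambda>y1 y2. sw hsc (comul x2) (\<lambda>a b. sw hsc (comul y2)
       (\<lambda>c d. mul (mul (S y1) (S x1)) (mul (mul a c) (S (mul b d)))))))"
    by (simp only: C D)
  also have "\<dots> = sw hsc (comul x) (\<lambda>x1 v. sw hsc (comul v) (\<lambda>x2 x3. sw hsc (comul y) (\<lambda>y1 w. sw hsc (comul w) (\<lambda>y2 y3.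
       mul (mul (S y1) (S x1)) (mul (mul x2 y2) (S (mul x3 y3)))))))"
    by (simp only: sw_swap[OF vs_hsc, of "comul y"])
  also have "\<dots> = sw hsc (comul x) (\<lambda>u x3. sw hsc (comul u) (\<lambda>x1 x2. sw hsc (comul y) (\<lambda>u' y3. sw hsc (comul u') (\<lambda>y1 y2.
       mul (mul (S y1) (S x1)) (mul (mul x2 y2) (S (mul x3 y3)))))))"
    by (simp only: coassoc[OF vs_hsc])
  also have "\<dots> = sw hsc (comul x) (\<lambda>u x3. sw hsc (comul y) (\<lambda>u' y3. sw hsc (comul u) (\<lambda>x1 x2. sw hsc (comul u') (\<lambda>y1 y2.
       mul (mul (S y1) (S x1)) (mul (mul x2 y2) (S (mul x3 y3)))))))"
    by (simp only: sw_swap[OF vs_hsc, of "comul u" "comul y" for u])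
  also have "\<dots> = sw hsc (comul x) (\<lambda>u x3. sw hsc (comul y) (\<lambda>u' y3. sw hsc (comul u') (\<lambda>y1 y2. sw hsc (comul u) (\<lambda>x1 x2.
       mul (mul (S y1) (S x1)) (mul (mul x2 y2) (S (mul x3 y3)))))))"
  proof -
    have E: "\<And>u u' x3 y3. sw hsc (comul u) (\<lambda>x1 x2. sw hsc (comul u') (\<lambda>y1 y2.
       mul (mul (S y1) (S x1)) (mul (mul x2 y2) (S (mul x3 y3))))) = sw hsc (comul u') (\<lambda>y1 y2. sw hsc (comul u) (\<lambda>x1 x2.
       mul (mul (S y1) (S x1)) (mul (mul x2 y2) (S (mul x3 y3)))))"
      by (rule sw_swap[OF vs_hsc])
    show ?thesis by (simp only: E)
  qed
  also have "\<dots> = sw hsc (comul x) (\<lambda>u x3. sw hsc (comul y) (\<lambda>u' y3. sw hsc (comul u') (\<lambda>y1 y2. sw hsc (comul u) (\<lambda>x1 x2.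
       mul (S y1) (mul (mul (mul (S x1) x2) y2) (S (mul x3 y3)))))))"
    by (simp only: mul_assoc)
  also have "\<dots> = sw hsc (comul x) (\<lambda>u x3. sw hsc (comul y) (\<lambda>u' y3. sw hsc (comul u') (\<lambda>y1 y2.
       hsc (eps u) (mul (S y1) (mul y2 (S (mul x3 y3)))))))"
  proof -
    have E: "\<And>u y1 y2 x3 y3. sw hsc (comul u) (\<lambda>x1 x2. mul (S y1) (mul (mul (mul (S x1) x2) y2) (S (mul x3 y3))))
       = hsc (eps u) (mul (S y1) (mul y2 (S (mul x3 y3))))"
      using antipode_l[OF vs_hsc, of "\<lambda>z. mul (S y1) (mul (mul z y2) (S (mul x3 y3)))" for y1 y2 x3 y3]
      by (simp add: linH)
    show ?thesis by (simp only: E)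
  qed
  also have "\<dots> = sw hsc (comul x) (\<lambda>u x3. hsc (eps u) (sw hsc (comul y) (\<lambda>u' y3. sw hsc (comul u') (\<lambda>y1 y2.
       mul (S y1) (mul y2 (S (mul x3 y3)))))))"
    by (simp only: sw_scale_F[OF vs_hsc])
  also have "\<dots> = sw hsc (comul y) (\<lambda>u' y3. sw hsc (comul u') (\<lambda>y1 y2. mul (S y1) (mul y2 (S (mul x y3)))))"
    by (rule counit_l[OF vs_hsc, of "\<lambda>x3. sw hsc (comul y) (\<lambda>u' y3. sw hsc (comul u') (\<lambda>y1 y2.
       mul (S y1) (mul y2 (S (mul x3 y3)))))"]) (intro linH)
  also have "\<dots> = sw hsc (comul y) (\<lambda>u' y3. hsc (eps u') (S (mul x y3)))"
  proof -
    have E: "\<And>u' y3. sw hsc (comul u') (\<lambda>y1 y2. mul (S y1) (mul y2 (S (mul x y3)))) = hsc (eps u') (S (mul x y3))"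
      using antipode_l[OF vs_hsc, of "\<lambda>z. mul z (S (mul x y3))" for y3]
      by (simp add: linH mul_assoc)
    show ?thesis by (simp only: E)
  qed
  also have "\<dots> = S (mul x y)"
    by (rule counit_l[OF vs_hsc, of "\<lambda>y3. S (mul x y3)"]) (intro linH)
  finally show ?thesis by simp
qed

end

lemma lookup_mtens: "vector_space sc \<Longrightarrow> Poly_Mapping.lookup (mtens sc m h) a = sc (Poly_Mapping.lookup h a) m"
proof -
  assume vs: "vector_space sc"
  have "Poly_Mapping.lookup (mtens sc m h) a = (\<Sum>x\<in>Poly_Mapping.keys h. if x = a then sc (Poly_Mapping.lookup h x) m else 0)"
    unfolding mtens_def lookup_sum lookup_single when_def by (intro sum.cong) auto
  also have "\<dots> = sc (Poly_Mapping.lookup h a) m"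
    by (simp add: sum.delta in_keys_iff vs_zero_l[OF vs])
  finally show ?thesis .
qed

lemma mtens_lin_h: "vector_space sc \<Longrightarrow> lin hsc (pms sc) (mtens sc m)"
  by (rule linI; rule poly_mapping_eqI) (simp_all add: lookup_mtens lookup_add lookup_pms lookup_hsc vs_add_l vs_scale)

lemma mtens_lin_m: "vector_space sc \<Longrightarrow> lin sc (pms sc) (\<lambda>m. mtens sc m h)"
  by (rule linI; rule poly_mapping_eqI) (simp_all add: lookup_mtens lookup_add lookup_pms vs_add_r vs_comm)

lemma mtens_bas: "vector_space sc \<Longrightarrow> mtens sc m (bas a) = Poly_Mapping.single a m"
  by (rule poly_mapping_eqI) (simp add: lookup_mtens lookup_bas lookup_single vs_one vs_zero_l)

lemma hom_ev_swg: "hom_ev sc f k = swg sc k f"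
  unfolding hom_ev_def swg_def ..

lemma hev_lin_k: "vector_space sc \<Longrightarrow> lin hsc sc (hom_ev sc f)"
  unfolding hom_ev_swg by (rule lin_swg)

lemma hev_bas: "vector_space sc \<Longrightarrow> hom_ev sc f (bas a) = f a"
  unfolding hom_ev_def by (simp add: lookup_bas vs_one)

lemma hev_lin_f: "vector_space sc \<Longrightarrow> lin (fsc sc) sc (\<lambda>f. hom_ev sc f k)"
  unfolding hom_ev_def lin_def fsc_def plus_fun_def
  by (simp add: vs_add_r sum.distrib vs_sum_r vs_comm)

lemma hev_eq: "vector_space sc \<Longrightarrow> lin hsc sc L \<Longrightarrow> hom_ev sc (\<lambda>a. L (bas a)) k = L k"
  by (rule lin_eq_bas[OF hev_lin_k]) (simp_all add: hev_bas)

definition sumt :: "('i \<Rightarrow>\<^sub>0 'm::zero) \<Rightarrow> ('m \<Rightarrow> 'i \<Rightarrow> 'v) \<Rightarrow> 'v::comm_monoid_add" where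
  "sumt t \<Psi> = (\<Sum>a\<in>Poly_Mapping.keys t. \<Psi> (Poly_Mapping.lookup t a) a)"

lemma sumt_keys:
  assumes "finite K" "Poly_Mapping.keys t \<subseteq> K" "\<And>a. \<Psi> 0 a = 0"
  shows "sumt t \<Psi> = (\<Sum>a\<in>K. \<Psi> (Poly_Mapping.lookup t a) a)"
  unfolding sumt_def using assms by (intro sum.mono_neutral_left) (auto simp: in_keys_iff)

lemma sumt_lin:
  fixes s1 :: "'k::field \<Rightarrow> 'm::ab_group_add \<Rightarrow> 'm" and \<Psi> :: "'m \<Rightarrow> 'i \<Rightarrow> 'v::ab_group_add"
  assumes vs: "vector_space s1" and vs2: "vector_space s2" and L: "\<And>a. lin s1 s2 (\<lambda>m. \<Psi> m a)"
  shows "lin (pms s1) s2 (\<lambda>t. sumt t \<Psi>)"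
proof (rule linI)
  have z: "\<And>a. \<Psi> 0 a = 0" using lin_zero[OF L] .
  fix x y :: "'i \<Rightarrow>\<^sub>0 'm"
  let ?K = "Poly_Mapping.keys x \<union> Poly_Mapping.keys y"
  have f: "finite ?K" by simp
  have k: "Poly_Mapping.keys (x + y) \<subseteq> ?K" by (rule keys_add)
  have k1: "Poly_Mapping.keys x \<subseteq> ?K" "Poly_Mapping.keys y \<subseteq> ?K" by auto
  show "sumt (x + y) \<Psi> = sumt x \<Psi> + sumt y \<Psi>"
    unfolding sumt_keys[where \<Psi>=\<Psi>, OF f k z] sumt_keys[where \<Psi>=\<Psi>, OF f k1(1) z] sumt_keys[where \<Psi>=\<Psi>, OF f k1(2) z]
    by (simp add: lookup_add lin_add[OF L] sum.distrib)
next
  have z: "\<And>a. \<Psi> 0 a = 0" using lin_zero[OF L] .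
  fix c and x :: "'i \<Rightarrow>\<^sub>0 'm"
  have k: "Poly_Mapping.keys (pms s1 c x) \<subseteq> Poly_Mapping.keys x"
    by (auto simp: in_keys_iff lookup_pms[OF vs] vs_zero_r[OF vs])
  show "sumt (pms s1 c x) \<Psi> = s2 c (sumt x \<Psi>)"
    using sumt_keys[where \<Psi>=\<Psi>, OF finite_keys k z]
    by (simp add: sumt_def lookup_pms[OF vs] lin_scale[OF L] vs_sum_r[OF vs2])
qed


lemma sumt_single: "\<Psi> 0 a = 0 \<Longrightarrow> sumt (Poly_Mapping.single a m) \<Psi> = \<Psi> m a"
  unfolding sumt_def by (cases "m = 0") (simp_all add: lookup_single)

lemma expand_pm: "(t :: 'i \<Rightarrow>\<^sub>0 'm::comm_monoid_add) = (\<Sum>a\<in>Poly_Mapping.keys t. Poly_Mapping.single a (Poly_Mapping.lookup t a))"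
proof (rule poly_mapping_eqI)
  fix k
  have "(\<Sum>i\<in>Poly_Mapping.keys t. Poly_Mapping.lookup (Poly_Mapping.single i (Poly_Mapping.lookup t i)) k)
      = (\<Sum>i\<in>Poly_Mapping.keys t. (if i = k then Poly_Mapping.lookup t i else 0))"
    by (rule sum.cong) (auto simp: lookup_single when_def)
  also have "\<dots> = Poly_Mapping.lookup t k"
    by (simp add: sum.delta in_keys_iff)
  finally show "Poly_Mapping.lookup t k = Poly_Mapping.lookup (\<Sum>a\<in>Poly_Mapping.keys t. Poly_Mapping.single a (Poly_Mapping.lookup t a)) k"
    by (simp add: lookup_sum)
qed

lemma lin_eq_single:
  assumes "lin s1 s2 L" "lin s1' s2 M" "\<And>a m. L (Poly_Mapping.single a m) = M (Poly_Mapping.single a m)"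
  shows "L t = M t"
proof -
  have "L t = L (\<Sum>a\<in>Poly_Mapping.keys t. Poly_Mapping.single a (Poly_Mapping.lookup t a))"
    by (rule arg_cong[where f=L, OF expand_pm])
  also have "\<dots> = M (\<Sum>a\<in>Poly_Mapping.keys t. Poly_Mapping.single a (Poly_Mapping.lookup t a))"
    by (simp only: lin_sum[OF assms(1)] lin_sum[OF assms(2)] assms(3))
  also have "\<dots> = M t"
    by (rule arg_cong[where f=M, OF expand_pm[symmetric]])
  finally show ?thesis .
qed

lemma sumt_mtens:
  assumes vs: "vector_space s1" and vs2: "vector_space s2" and L: "\<And>a. lin s1 s2 (\<lambda>m. \<Psi> m a)"
  shows "sumt (mtens s1 m k) \<Psi> = hom_ev s2 (\<Psi> m) k"
proof (rule lin_eq_bas[where x=k])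
  show "lin hsc s2 (\<lambda>k. sumt (mtens s1 m k) \<Psi>)"
    by (rule lin_comp[OF mtens_lin_h[OF vs] sumt_lin[OF vs vs2 L]])
  show "lin hsc s2 (hom_ev s2 (\<Psi> m))" by (rule hev_lin_k[OF vs2])
  fix i show "sumt (mtens s1 m (bas i)) \<Psi> = hom_ev s2 (\<Psi> m) (bas i)"
    by (simp add: mtens_bas[OF vs] sumt_single lin_zero[OF L] hev_bas[OF vs2])
qed

lemma sumt_mtens_lin:
  assumes vs: "vector_space s1" and vs2: "vector_space s2" and L: "\<And>a. lin s1 s2 (\<lambda>m. Y m (bas a))"
    and Y: "lin hsc s2 (Y m)"
  shows "sumt (mtens s1 m k) (\<lambda>m a. Y m (bas a)) = Y m k"
  using sumt_mtens[OF vs vs2 L, of m k] hev_eq[OF vs2 Y] by simp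

lemma sw_in_subspace:
  assumes vs: "vector_space sc" and V: "module.subspace sc V" and F: "\<And>i j. F (bas i) (bas j) \<in> V"
  shows "sw sc t F \<in> V"
proof -
  interpret module sc using vs by (simp add: module_iff_vector_space)
  show ?thesis unfolding sw_def
    by (intro subspace_sum[OF V] subspace_scale[OF V] F)
qed

locale hpa = hopf mul one comul eps S
  for mul :: "('i \<Rightarrow>\<^sub>0 'k::field) \<Rightarrow> ('i \<Rightarrow>\<^sub>0 'k) \<Rightarrow> ('i \<Rightarrow>\<^sub>0 'k)"
    and one :: "'i \<Rightarrow>\<^sub>0 'k"
    and comul :: "('i \<Rightarrow>\<^sub>0 'k) \<Rightarrow> ('i \<times> 'i) \<Rightarrow>\<^sub>0 'k"
    and eps :: "('i \<Rightarrow>\<^sub>0 'k) \<Rightarrow> 'k"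
    and S :: "('i \<Rightarrow>\<^sub>0 'k) \<Rightarrow> ('i \<Rightarrow>\<^sub>0 'k)" +
  fixes sB :: "'k \<Rightarrow> 'B::ring_1 \<Rightarrow> 'B"
    and act :: "('i \<Rightarrow>\<^sub>0 'k) \<Rightarrow> 'B \<Rightarrow> 'B"
  assumes kalg: "k_algebra sB"
    and spa: "sym_partial_action mul one comul sB act"
begin

lemma vsB: "vector_space sB" using kalg by (simp add: k_algebra_def)
lemma vsBH: "vector_space (pms sB)" by (rule vs_pms[OF vsB])
lemma vsHB: "vector_space (fsc sB)" by (rule vs_fsc[OF vsB])
lemma vsHBH: "vector_space (fsc (pms sB))" by (rule vs_fsc[OF vsBH])
lemma vsSM: "vector_space (pms (fsc sB))" by (rule vs_pms[OF vsHB])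

lemma multB_lin1: "lin sB sB (\<lambda>x. x * b)"
proof -
  have h: "\<And>c x y. sB c (x * y) = sB c x * y" using kalg unfolding k_algebra_def by blast
  show ?thesis by (intro linI) (simp_all only: h distrib_right)
qed
lemma multB_lin2: "lin sB sB (\<lambda>x. b * x)"
proof -
  have h: "\<And>c x y. sB c (x * y) = x * sB c y" using kalg unfolding k_algebra_def by blast
  show ?thesis by (intro linI) (simp_all only: h distrib_left)
qed

lemma act_lin1: "lin hsc sB (\<lambda>h. act h b)"
  using spa unfolding sym_partial_action_def bilinear_k_def by (auto intro: linear_lin)
lemma act_lin2: "lin sB sB (act h)"
  using spa unfolding sym_partial_action_def bilinear_k_def by (auto intro: linear_lin)
lemma act_one: "act one a = a"
  using spa unfolding sym_partial_action_def by auto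
lemma act_mult: "act h (a * b) = sw sB (comul h) (\<lambda>x y. act x a * act y b)"
  using spa unfolding sym_partial_action_def by auto
lemma act_act1: "act h (act k a) = sw sB (comul h) (\<lambda>x y. act x 1 * act (mul y k) a)"
  using spa unfolding sym_partial_action_def by auto
lemma act_act2: "act h (act k a) = sw sB (comul h) (\<lambda>x y. act (mul x k) a * act y 1)"
  using spa unfolding sym_partial_action_def by auto

lemma lin_compH: "lin hsc hsc L \<Longrightarrow> lin hsc sc M \<Longrightarrow> lin hsc sc (\<lambda>x. M (L x))"
  by (rule lin_comp)

lemma lin_mtensL: "vector_space sc \<Longrightarrow> lin s1 sc L \<Longrightarrow> lin s1 (pms sc) (\<lambda>x. mtens sc (L x) h)"
  by (rule lin_comp[OF _ mtens_lin_m])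
lemma lin_mtensR: "vector_space sc \<Longrightarrow> lin s1 hsc L \<Longrightarrow> lin s1 (pms sc) (\<lambda>x. mtens sc m (L x))"
  by (rule lin_comp[OF _ mtens_lin_h])
lemma lin_actL: "lin s1 hsc L \<Longrightarrow> lin s1 sB (\<lambda>x. act (L x) b)"
  by (rule lin_comp[OF _ act_lin1])
lemma lin_actR: "lin s1 sB L \<Longrightarrow> lin s1 sB (\<lambda>x. act h (L x))"
  by (rule lin_comp[OF _ act_lin2])
lemma lin_multBL: "lin s1 sB L \<Longrightarrow> lin s1 sB (\<lambda>x. L x * b)"
  by (rule lin_comp[OF _ multB_lin1])
lemma lin_multBR: "lin s1 sB L \<Longrightarrow> lin s1 sB (\<lambda>x. b * L x)"
  by (rule lin_comp[OF _ multB_lin2])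
lemma lin_mulLg: "lin s1 hsc L \<Longrightarrow> lin s1 hsc (\<lambda>x. mul (L x) y)"
  by (rule lin_comp[OF _ mul_lin1])
lemma lin_mulRg: "lin s1 hsc L \<Longrightarrow> lin s1 hsc (\<lambda>x. mul y (L x))"
  by (rule lin_comp[OF _ mul_lin2])
lemma lin_SLg: "lin s1 hsc L \<Longrightarrow> lin s1 hsc (\<lambda>x. S (L x))"
  by (rule lin_comp[OF _ S_lin])
lemma lin_swcg: "vector_space sc \<Longrightarrow> lin s1 hsc L \<Longrightarrow> lin s1 sc (\<lambda>x. sw sc (comul (L x)) F)"
  by (rule lin_comp[OF _ lin_sw_comul])
lemma lin_hevR: "vector_space sc \<Longrightarrow> lin s1 hsc L \<Longrightarrow> lin s1 sc (\<lambda>x. hom_ev sc f (L x))"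
  by (rule lin_comp[OF _ hev_lin_k])
lemma lin_hevL: "vector_space sc \<Longrightarrow> lin s1 (fsc sc) L \<Longrightarrow> lin s1 sc (\<lambda>x. hom_ev sc (L x) k)"
  by (rule lin_comp[OF _ hev_lin_f])

lemmas linB = lin_idH lin_mtensL[OF vsB] lin_mtensR[OF vsB] lin_actL lin_actR lin_multBL lin_multBR
  lin_mulLg lin_mulRg lin_SLg lin_swF[OF vsB] lin_swF[OF vsBH] lin_swF[OF vs_hsc] lin_swF[OF vsSM] lin_swF[OF vsHBH]
  lin_swcg[OF vsB] lin_swcg[OF vsBH] lin_swcg[OF vs_hsc]
  lin_hevR[OF vsB] lin_hevL[OF vsB] lin_hevR[OF vsBH] lin_mtensL[OF vsHB] lin_mtensR[OF vsHB]
  lin_scF[OF vsB] lin_scF[OF vsBH] lin_epsc[OF vsB] lin_epsc[OF vsBH]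

lemma BH_pi_sumt: "BH_pi mul comul sB act h t = sumt t (\<lambda>m a. sw (pms sB) (comul h) (\<lambda>x y. mtens sB (act x m) (mul y (bas a))))"
  unfolding BH_pi_def sumt_def ..

lemma BH_pi_lin: "lin (pms sB) (pms sB) (BH_pi mul comul sB act h)"
  unfolding BH_pi_sumt by (rule sumt_lin[OF vsB vsBH]) (intro linB)

lemma BH_pi_mtens: "BH_pi mul comul sB act h (mtens sB b k) = sw (pms sB) (comul h) (\<lambda>x y. mtens sB (act x b) (mul y k))"
  unfolding BH_pi_sumt
  by (rule sumt_mtens_lin[OF vsB vsBH, where Y="\<lambda>b k. sw (pms sB) (comul h) (\<lambda>x y. mtens sB (act x b) (mul y k))"]) (intro linB)+

lemma smash_act_sumt: "smash_act mul comul sB h t = sumt t (\<lambda>f a. sw (pms (fsc sB)) (comul h) (\<lambda>x y. mtens (fsc sB) (hom_act mul sB x f) (mul y (bas a))))"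
  unfolding smash_act_def sumt_def ..

lemma hom_act_lin_f: "lin (fsc sc) (fsc sc) (hom_act mul sc h)" if "vector_space sc"
  unfolding hom_act_def by (rule linI) (simp_all add: fun_eq_iff fsc_def lin_add[OF hev_lin_f[OF that]] lin_scale[OF hev_lin_f[OF that], unfolded fsc_def])

end

lemma lin_sum_fun: "vector_space s2 \<Longrightarrow> (\<And>a. lin s1 s2 (f a)) \<Longrightarrow> lin s1 s2 (\<lambda>x. \<Sum>a\<in>A. f a x)"
  unfolding lin_def by (simp add: sum.distrib vs_sum_r)

lemma lin_id: "lin s s (\<lambda>x. x)" by (simp add: lin_def)

context hpa begin

lemma lin_hom_actL: "vector_space sc \<Longrightarrow> lin s1 (fsc sc) L \<Longrightarrow> lin s1 (fsc sc) (\<lambda>x. hom_act mul sc h (L x))"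
  by (rule lin_comp[OF _ hom_act_lin_f])

lemma smash_act_lin: "lin (pms (fsc sB)) (pms (fsc sB)) (smash_act mul comul sB h)"
  unfolding smash_act_sumt
  by (rule sumt_lin[OF vsHB vsSM]) (intro lin_swF[OF vsSM] lin_mtensL[OF vsHB] lin_hom_actL[OF vsB] lin_id)

lemma smash_act_mtens: "smash_act mul comul sB h (mtens (fsc sB) f k)
   = sw (pms (fsc sB)) (comul h) (\<lambda>x y. mtens (fsc sB) (hom_act mul sB x f) (mul y k))"
  unfolding smash_act_sumt
  by (rule sumt_mtens_lin[OF vsHB vsSM, where Y="\<lambda>f k. sw (pms (fsc sB)) (comul h) (\<lambda>x y. mtens (fsc sB) (hom_act mul sB x f) (mul y k))"])
     (intro lin_swF[OF vsSM] lin_mtensL[OF vsHB] lin_hom_actL[OF vsB] lin_id lin_mtensR[OF vsHB] lin_mulRg)+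

lemma hev_hom_act: "vector_space sc \<Longrightarrow> hom_ev sc (hom_act mul sc h f) k = hom_ev sc f (mul k h)"
  by (rule lin_eq_bas[OF hev_lin_k lin_hevR[OF _ lin_mulLg[OF lin_id]]]) (simp_all add: hev_bas hom_act_def)

lemma hom_act_comp: "vector_space sc \<Longrightarrow> hom_act mul sc h (hom_act mul sc h' f) = hom_act mul sc (mul h h') f"
  by (simp add: hom_act_def[of mul sc h "hom_act mul sc h' f"] hom_act_def[of mul sc "mul h h'" f] hev_hom_act mul_assoc fun_eq_iff)

lemma hom_act_one: "vector_space sc \<Longrightarrow> hom_act mul sc one f = f"
  by (simp add: hom_act_def hev_bas fun_eq_iff)

lemma hom_act_lin_h: "vector_space sc \<Longrightarrow> lin hsc (fsc sc) (\<lambda>h. hom_act mul sc h f)"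
  unfolding hom_act_def lin_def fsc_def
  by (simp add: fun_eq_iff lin_add[OF lin_hevR[OF _ lin_mulRg[OF lin_id]]] lin_scale[OF lin_hevR[OF _ lin_mulRg[OF lin_id]]])

lemma hev_dil: "vector_space sc \<Longrightarrow> lin hsc sc (\<lambda>h. \<pi> h m) \<Longrightarrow> hom_ev sc (dil_phi \<pi> m) k = \<pi> k m"
  unfolding dil_phi_def by (rule hev_eq)

definition Fk :: "('i \<Rightarrow>\<^sub>0 ('i \<Rightarrow> 'B)) \<Rightarrow> ('i \<Rightarrow>\<^sub>0 'k) \<Rightarrow> ('i \<Rightarrow>\<^sub>0 'B)" where
  "Fk t k = sumt t (\<lambda>f a. sw (pms sB) (comul k) (\<lambda>x y. mtens sB (hom_ev sB f x) (mul y (bas a))))"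

definition Fm :: "('i \<Rightarrow>\<^sub>0 ('i \<Rightarrow> 'B)) \<Rightarrow> ('i \<Rightarrow> ('i \<Rightarrow>\<^sub>0 'B))" where
  "Fm t = (\<lambda>l. Fk t (bas l))"

lemma Fk_lin_t: "lin (pms (fsc sB)) (pms sB) (\<lambda>t. Fk t k)"
  unfolding Fk_def
  by (rule sumt_lin[OF vsHB vsBH]) (intro lin_swF[OF vsBH] lin_mtensL[OF vsB] lin_hevL[OF vsB] lin_id)

lemma Fk_lin_k: "lin hsc (pms sB) (Fk t)"
  unfolding Fk_def sumt_def
  by (intro lin_sum_fun[OF vsBH] lin_swcg[OF vsBH] lin_id)

lemma Fk_mtens: "Fk (mtens (fsc sB) f k') k = sw (pms sB) (comul k) (\<lambda>x y. mtens sB (hom_ev sB f x) (mul y k'))"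
  unfolding Fk_def
  by (rule sumt_mtens_lin[OF vsHB vsBH, where Y="\<lambda>f k'. sw (pms sB) (comul k) (\<lambda>x y. mtens sB (hom_ev sB f x) (mul y k'))"])
     (intro lin_swF[OF vsBH] lin_mtensL[OF vsB] lin_hevL[OF vsB] lin_id lin_mtensR[OF vsB] lin_mulRg)+

lemma hev_Fm: "hom_ev (pms sB) (Fm t) k = Fk t k"
  unfolding Fm_def by (rule hev_eq[OF vsBH Fk_lin_k])

lemma Fm_lin: "lin (pms (fsc sB)) (fsc (pms sB)) Fm"
  unfolding Fm_def by (intro linI ext) (simp_all add: fsc_apply plus_fun_def lin_add[OF Fk_lin_t] lin_scale[OF Fk_lin_t])

lemma Fm_smash: "Fm (smash_act mul comul sB h t) = hom_act mul (pms sB) h (Fm t)"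
proof (rule lin_eq_single[where t=t])
  show "lin (pms (fsc sB)) (fsc (pms sB)) (\<lambda>t. Fm (smash_act mul comul sB h t))"
    by (rule lin_comp[OF smash_act_lin Fm_lin])
  show "lin (pms (fsc sB)) (fsc (pms sB)) (\<lambda>t. hom_act mul (pms sB) h (Fm t))"
    by (rule lin_comp[OF Fm_lin hom_act_lin_f[OF vsBH]])
  fix a :: 'i and f :: "'i \<Rightarrow> 'B"
  have sm: "Poly_Mapping.single a f = mtens (fsc sB) f (bas a)" by (simp add: mtens_bas[OF vsHB])
  show "Fm (smash_act mul comul sB h (Poly_Mapping.single a f)) = hom_act mul (pms sB) h (Fm (Poly_Mapping.single a f))"
  proof (rule ext)
    fix l
    have "Fm (smash_act mul comul sB h (Poly_Mapping.single a f)) l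
       = sw (pms sB) (comul h) (\<lambda>x y. sw (pms sB) (comul (bas l)) (\<lambda>u v. mtens sB (hom_ev sB (hom_act mul sB x f) u) (mul v (mul y (bas a)))))"
      unfolding sm smash_act_mtens Fm_def by (simp only: sw_linear[OF Fk_lin_t] Fk_mtens)
    also have "\<dots> = sw (pms sB) (comul h) (\<lambda>x y. sw (pms sB) (comul (bas l)) (\<lambda>u v. mtens sB (hom_ev sB f (mul u x)) (mul (mul v y) (bas a))))"
      by (simp only: hev_hom_act[OF vsB] mul_assoc)
    also have "\<dots> = sw (pms sB) (comul (bas l)) (\<lambda>u v. sw (pms sB) (comul h) (\<lambda>x y. mtens sB (hom_ev sB f (mul u x)) (mul (mul v y) (bas a))))"
      by (rule sw_swap[OF vsBH])
    also have "\<dots> = sw (pms sB) (comul (mul (bas l) h)) (\<lambda>x y. mtens sB (hom_ev sB f x) (mul y (bas a)))"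
      by (rule comul_mul[OF vsBH, symmetric]) (intro lin_mtensL[OF vsB] lin_mtensR[OF vsB] lin_hevR[OF vsB] lin_mulLg lin_id)+
    also have "\<dots> = hom_act mul (pms sB) h (Fm (Poly_Mapping.single a f)) l"
      unfolding hom_act_def hev_Fm sm Fk_mtens ..
    finally show "Fm (smash_act mul comul sB h (Poly_Mapping.single a f)) l = hom_act mul (pms sB) h (Fm (Poly_Mapping.single a f)) l" .
  qed
qed

end

lemma sw_sum_F: "vector_space sc \<Longrightarrow> sw sc t (\<lambda>x y. \<Sum>a\<in>A. G a x y) = (\<Sum>a\<in>A. sw sc t (G a))"
  unfolding sw_def by (simp add: vs_sum_r sum.swap[where A="Poly_Mapping.keys t"])

context hopf begin

definition T where "T = inv S"

lemma S_T: "S (T x) = x"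
  unfolding T_def using bijS by (simp add: bij_is_surj surj_f_inv_f)
lemma T_S: "T (S x) = x"
  unfolding T_def using bijS by (simp add: bij_is_inj inv_f_f)
lemma S_inj: "S x = S y \<Longrightarrow> x = y"
  using bijS by (simp add: bij_is_inj inj_eq)

lemma S_one: "S one = one"
proof -
  have "sw hsc (comul one) (\<lambda>a b. mul (S a) b) = mul (S one) one"
    by (rule comul_one[OF vs_hsc]) (intro linH)+
  then show ?thesis using antipode_raw(1)[of one] by (simp add: vs_one[OF vs_hsc])
qed

lemma T_lin: "lin hsc hsc T"
proof (rule linI)
  fix x y show "T (x + y) = T x + T y"
    by (rule S_inj) (simp add: S_T lin_add[OF S_lin])
next
  fix c x show "T (hsc c x) = hsc c (T x)"
    by (rule S_inj) (simp add: S_T lin_scale[OF S_lin])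
qed

lemma T_ident: "sw hsc (comul l) (\<lambda>a b. mul (T b) a) = hsc (eps l) one"
proof (rule S_inj)
  have "S (sw hsc (comul l) (\<lambda>a b. mul (T b) a)) = sw hsc (comul l) (\<lambda>a b. S (mul (T b) a))"
    by (rule sw_linear[OF S_lin])
  also have "\<dots> = sw hsc (comul l) (\<lambda>a b. mul (S a) b)"
    by (simp only: S_antimult S_T)
  also have "\<dots> = hsc (eps l) one" by (rule antipode_raw(1))
  also have "\<dots> = S (hsc (eps l) one)" by (simp add: lin_scale[OF S_lin] S_one)
  finally show "S (sw hsc (comul l) (\<lambda>a b. mul (T b) a)) = S (hsc (eps l) one)" .
qed

lemma T_ident_gen:
  assumes vs: "vector_space sc" and G: "lin hsc sc G"
  shows "sw sc (comul h) (\<lambda>a b. G (mul (T b) a)) = sc (eps h) (G one)"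
proof -
  have "sw sc (comul h) (\<lambda>a b. G (mul (T b) a)) = G (sw hsc (comul h) (\<lambda>a b. mul (T b) a))"
    by (simp only: sw_linear[OF G])
  also have "\<dots> = sc (eps h) (G one)" by (simp only: T_ident lin_scale[OF G])
  finally show ?thesis .
qed

end

context hpa begin

definition Lm :: "('i \<Rightarrow>\<^sub>0 'k) \<Rightarrow> ('i \<Rightarrow>\<^sub>0 'B) \<Rightarrow> ('i \<Rightarrow>\<^sub>0 'B)" where
  "Lm y m = sumt m (\<lambda>b a. mtens sB b (mul y (bas a)))"

lemma Lm_lin: "lin (pms sB) (pms sB) (Lm y)"
  unfolding Lm_def by (rule sumt_lin[OF vsB vsBH]) (intro linB)

lemma Lm_mtens: "Lm y (mtens sB b k) = mtens sB b (mul y k)"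
  unfolding Lm_def
  by (rule sumt_mtens_lin[OF vsB vsBH, where Y="\<lambda>b k. mtens sB b (mul y k)"]) (intro linB)+

lemma Q_single:
  "sw (pms sB) (comul (bas l)) (\<lambda>p q. Lm (T q) (sw (pms sB) (comul p) (\<lambda>x y. mtens sB (hom_ev sB f x) (mul y (bas a)))))
   = Poly_Mapping.single a (f l)"
proof -
  have "sw (pms sB) (comul (bas l)) (\<lambda>p q. Lm (T q) (sw (pms sB) (comul p) (\<lambda>x y. mtens sB (hom_ev sB f x) (mul y (bas a)))))
     = sw (pms sB) (comul (bas l)) (\<lambda>p q. sw (pms sB) (comul p) (\<lambda>x y. mtens sB (hom_ev sB f x) (mul (T q) (mul y (bas a)))))"
    by (simp only: sw_linear[OF Lm_lin] Lm_mtens)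
  also have "\<dots> = sw (pms sB) (comul (bas l)) (\<lambda>x r. sw (pms sB) (comul r) (\<lambda>y q. mtens sB (hom_ev sB f x) (mul (T q) (mul y (bas a)))))"
    by (rule coassoc[OF vsBH])
  also have "\<dots> = sw (pms sB) (comul (bas l)) (\<lambda>x r. pms sB (eps r) (mtens sB (hom_ev sB f x) (bas a)))"
  proof -
    have E: "\<And>x r. sw (pms sB) (comul r) (\<lambda>y q. mtens sB (hom_ev sB f x) (mul (T q) (mul y (bas a))))
        = pms sB (eps r) (mtens sB (hom_ev sB f x) (bas a))"
      using T_ident_gen[OF vsBH, of "\<lambda>z. mtens sB (hom_ev sB f x) (mul z (bas a))" for x]
      by (simp add: mul_assoc lin_mtensR[OF vsB] lin_mulLg lin_id)
    show ?thesis by (simp only: E)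
  qed
  also have "\<dots> = mtens sB (hom_ev sB f (bas l)) (bas a)"
    by (rule counit_r[OF vsBH]) (intro linB)
  also have "\<dots> = Poly_Mapping.single a (f l)"
    by (simp add: hev_bas[OF vsB] mtens_bas[OF vsB])
  finally show ?thesis .
qed

lemma Fm_zero: assumes "Fm t = 0" shows "t = 0"
proof -
  have z: "\<And>i. Fk t (bas i) = 0" using assms unfolding Fm_def by (simp add: fun_eq_iff)
  have Z: "\<And>l. (0 :: 'i \<Rightarrow>\<^sub>0 'B) = (\<Sum>a\<in>Poly_Mapping.keys t. Poly_Mapping.single a (Poly_Mapping.lookup t a l))"
  proof -
    fix l
    have "(0 :: 'i \<Rightarrow>\<^sub>0 'B) = sw (pms sB) (comul (bas l)) (\<lambda>p q. Lm (T q) (Fk t p))"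
      by (simp add: sw_cong[where G="\<lambda>p q. 0"] z lin_zero[OF Lm_lin] sw_zero_F[OF vsBH])
    also have "\<dots> = sw (pms sB) (comul (bas l)) (\<lambda>p q. \<Sum>a\<in>Poly_Mapping.keys t. Lm (T q) (sw (pms sB) (comul p) (\<lambda>x y. mtens sB (hom_ev sB (Poly_Mapping.lookup t a) x) (mul y (bas a)))))"
      unfolding Fk_def sumt_def by (simp only: lin_sum[OF Lm_lin])
    also have "\<dots> = (\<Sum>a\<in>Poly_Mapping.keys t. Poly_Mapping.single a (Poly_Mapping.lookup t a l))"
      by (simp only: sw_sum_F[OF vsBH] Q_single)
    finally show "(0 :: 'i \<Rightarrow>\<^sub>0 'B) = (\<Sum>a\<in>Poly_Mapping.keys t. Poly_Mapping.single a (Poly_Mapping.lookup t a l))" .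
  qed
  have "\<And>l a. a \<in> Poly_Mapping.keys t \<Longrightarrow> Poly_Mapping.lookup t a l = 0"
  proof -
    fix l a assume a: "a \<in> Poly_Mapping.keys t"
    have "0 = Poly_Mapping.lookup (\<Sum>a\<in>Poly_Mapping.keys t. Poly_Mapping.single a (Poly_Mapping.lookup t a l)) a"
      using Z[of l] by (metis lookup_zero)
    also have "\<dots> = (\<Sum>b\<in>Poly_Mapping.keys t. if b = a then Poly_Mapping.lookup t b l else 0)"
      unfolding lookup_sum by (intro sum.cong) (auto simp: lookup_single when_def)
    also have "\<dots> = Poly_Mapping.lookup t a l" using a by (simp add: sum.delta)
    finally show "Poly_Mapping.lookup t a l = 0" by simp
  qed
  then have "\<And>a. a \<in> Poly_Mapping.keys t \<Longrightarrow> Poly_Mapping.lookup t a = 0"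
    by (simp add: fun_eq_iff)
  then show "t = 0"
    by (intro poly_mapping_eqI) (metis in_keys_iff lookup_zero)
qed

lemma Fm_inj: "Fm x = Fm y \<Longrightarrow> x = y"
  using Fm_zero[of "x - y"] lin_diff[OF Fm_lin, of x y] by simp

end

lemma span_ind:
  assumes vs: "vector_space s" and x: "x \<in> module.span s G" and P0: "P 0"
    and st: "\<And>c g y. g \<in> G \<Longrightarrow> P y \<Longrightarrow> P (s c g + y)"
  shows "P x"
proof -
  interpret module s using vs by (simp add: module_iff_vector_space)
  show ?thesis using x by (induction rule: span_induct_alt) (auto intro: P0 st)
qed

lemma span_image_lin:
  assumes vs1: "vector_space s1" and vs2: "vector_space s2" and L: "lin s1 s2 L"
    and x: "x \<in> module.span s1 G" and g: "\<And>g. g \<in> G \<Longrightarrow> L g \<in> V" and V: "module.subspace s2 V"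
  shows "L x \<in> V"
proof -
  interpret m2: module s2 using vs2 by (simp add: module_iff_vector_space)
  show ?thesis
    using x
  proof (rule span_ind[OF vs1])
    show "L 0 \<in> V" using lin_zero[OF L] m2.subspace_0[OF V] by simp
    fix c g y assume "g \<in> G" "L y \<in> V"
    then show "L (s1 c g + y) \<in> V"
      by (simp add: lin_add[OF L] lin_scale[OF L] m2.subspace_add[OF V] m2.subspace_scale[OF V] g)
  qed
qed

lemma span_fix_lin:
  assumes vs: "vector_space s" and L: "lin s s L" and x: "x \<in> module.span s G"
    and g: "\<And>g. g \<in> G \<Longrightarrow> L g = g"
  shows "L x = x"
  using x
proof (rule span_ind[OF vs])
  show "L 0 = 0" by (rule lin_zero[OF L])
  fix c g y assume "g \<in> G" "L y = y"
  then show "L (s c g + y) = s c g + y" by (simp add: lin_add[OF L] lin_scale[OF L] g)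
qed

lemma span_in: "vector_space s \<Longrightarrow> g \<in> G \<Longrightarrow> g \<in> module.span s G"
  by (simp add: module.span_base module_iff_vector_space)

lemma subspace_span': "vector_space s \<Longrightarrow> module.subspace s (module.span s G)"
  by (simp add: module.subspace_span module_iff_vector_space)

context hpa begin

definition Pm :: "('i \<Rightarrow>\<^sub>0 'B) \<Rightarrow> ('i \<Rightarrow>\<^sub>0 'B)" where
  "Pm m = sumt m (\<lambda>b a. psmash_elt comul sB act b (bas a))"

lemma Pm_lin: "lin (pms sB) (pms sB) Pm"
  unfolding Pm_def psmash_elt_def by (rule sumt_lin[OF vsB vsBH]) (intro linB)

lemma Pm_mtens: "Pm (mtens sB b k) = sw (pms sB) (comul k) (\<lambda>x y. mtens sB (b * act x 1) y)"
  unfolding Pm_def psmash_elt_def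
  by (rule sumt_mtens_lin[OF vsB vsBH, where Y="\<lambda>b k. sw (pms sB) (comul k) (\<lambda>x y. mtens sB (b * act x 1) y)"]) (intro linB)+

lemma psmash_elt_Pm: "psmash_elt comul sB act b k = Pm (mtens sB b k)"
  unfolding Pm_mtens psmash_elt_def ..

lemma act_mult_lin:
  assumes vs: "vector_space sc" and G: "lin sB sc G"
  shows "sw sc (comul w) (\<lambda>x1 p. G (act x1 b * act p c)) = G (act w (b * c))"
  by (simp only: act_mult sw_linear[OF G])

lemma Pm_idem: "Pm (Pm m) = Pm m"
proof (rule lin_eq_single[where t=m])
  show "lin (pms sB) (pms sB) (\<lambda>m. Pm (Pm m))" by (rule lin_comp[OF Pm_lin Pm_lin])
  show "lin (pms sB) (pms sB) Pm" by (rule Pm_lin)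
  fix a :: 'i and b :: 'B
  have sm: "Poly_Mapping.single a b = mtens sB b (bas a)" by (simp add: mtens_bas[OF vsB])
  have "Pm (Pm (mtens sB b (bas a))) = sw (pms sB) (comul (bas a)) (\<lambda>a1 a2. sw (pms sB) (comul a2) (\<lambda>u v. mtens sB (b * act a1 1 * act u 1) v))"
    by (simp only: Pm_mtens sw_linear[OF Pm_lin])
  also have "\<dots> = sw (pms sB) (comul (bas a)) (\<lambda>w v. sw (pms sB) (comul w) (\<lambda>a1 u. mtens sB (b * act a1 1 * act u 1) v))"
    by (rule coassoc[OF vsBH, symmetric])
  also have "\<dots> = sw (pms sB) (comul (bas a)) (\<lambda>w v. mtens sB (b * act w 1) v)"
  proof -
    have E: "\<And>w v. sw (pms sB) (comul w) (\<lambda>a1 u. mtens sB (b * act a1 1 * act u 1) v) = mtens sB (b * act w 1) v"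
      using act_mult_lin[OF vsBH, where G="\<lambda>z. mtens sB (b * z) v" and b=1 and c=1 for v]
      by (simp add: mult.assoc linB)
    show ?thesis by (simp only: E)
  qed
  also have "\<dots> = Pm (mtens sB b (bas a))" by (simp only: Pm_mtens)
  finally show "Pm (Pm (Poly_Mapping.single a b)) = Pm (Poly_Mapping.single a b)" unfolding sm .
qed

lemma Pm_BH: "Pm (BH_pi mul comul sB act h m) = BH_pi mul comul sB act h (Pm m)"
proof (rule lin_eq_single[where t=m])
  show "lin (pms sB) (pms sB) (\<lambda>m. Pm (BH_pi mul comul sB act h m))" by (rule lin_comp[OF BH_pi_lin Pm_lin])
  show "lin (pms sB) (pms sB) (\<lambda>m. BH_pi mul comul sB act h (Pm m))" by (rule lin_comp[OF Pm_lin BH_pi_lin])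
  fix a :: 'i and b :: 'B
  have sm: "Poly_Mapping.single a b = mtens sB b (bas a)" by (simp add: mtens_bas[OF vsB])
  have "Pm (BH_pi mul comul sB act h (mtens sB b (bas a)))
      = sw (pms sB) (comul h) (\<lambda>x y. sw (pms sB) (comul (mul y (bas a))) (\<lambda>u v. mtens sB (act x b * act u 1) v))"
    by (simp only: BH_pi_mtens sw_linear[OF Pm_lin] Pm_mtens)
  also have "\<dots> = sw (pms sB) (comul h) (\<lambda>x y. sw (pms sB) (comul y) (\<lambda>y1 y2. sw (pms sB) (comul (bas a))
      (\<lambda>a1 a2. mtens sB (act x b * act (mul y1 a1) 1) (mul y2 a2))))"
  proof -
    have E: "\<And>x y. sw (pms sB) (comul (mul y (bas a))) (\<lambda>u v. mtens sB (act x b * act u 1) v)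
       = sw (pms sB) (comul y) (\<lambda>y1 y2. sw (pms sB) (comul (bas a)) (\<lambda>a1 a2. mtens sB (act x b * act (mul y1 a1) 1) (mul y2 a2)))"
      by (rule comul_mul[OF vsBH]) (intro linB)+
    show ?thesis by (simp only: E)
  qed
  also have "\<dots> = sw (pms sB) (comul h) (\<lambda>x y. sw (pms sB) (comul x) (\<lambda>w q. sw (pms sB) (comul (bas a))
      (\<lambda>a1 a2. mtens sB (act w b * act (mul q a1) 1) (mul y a2))))"
    by (rule coassoc[OF vsBH, symmetric])
  finally have L: "Pm (BH_pi mul comul sB act h (mtens sB b (bas a))) = sw (pms sB) (comul h) (\<lambda>x y. sw (pms sB) (comul x) (\<lambda>w q. sw (pms sB) (comul (bas a))
      (\<lambda>a1 a2. mtens sB (act w b * act (mul q a1) 1) (mul y a2))))" .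
  have "BH_pi mul comul sB act h (Pm (mtens sB b (bas a)))
      = sw (pms sB) (comul (bas a)) (\<lambda>a1 a2. sw (pms sB) (comul h) (\<lambda>x y. mtens sB (act x (b * act a1 1)) (mul y a2)))"
    by (simp only: Pm_mtens sw_linear[OF BH_pi_lin] BH_pi_mtens)
  also have "\<dots> = sw (pms sB) (comul (bas a)) (\<lambda>a1 a2. sw (pms sB) (comul h) (\<lambda>x y. sw (pms sB) (comul x) (\<lambda>x1 x2.
      sw (pms sB) (comul x2) (\<lambda>p q. mtens sB (act x1 b * (act p 1 * act (mul q a1) 1)) (mul y a2)))))"
  proof -
    have E: "\<And>x a1 y a2. mtens sB (act x (b * act a1 1)) (mul y a2) = sw (pms sB) (comul x) (\<lambda>x1 x2.
      sw (pms sB) (comul x2) (\<lambda>p q. mtens sB (act x1 b * (act p 1 * act (mul q a1) 1)) (mul y a2)))"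
    proof -
      fix x a1 y a2
      have l1: "lin sB (pms sB) (\<lambda>z. mtens sB z (mul y a2))" by (intro linB)
      have l2: "\<And>x1. lin sB (pms sB) (\<lambda>z. mtens sB (act x1 b * z) (mul y a2))" by (intro linB)
      show "mtens sB (act x (b * act a1 1)) (mul y a2) = sw (pms sB) (comul x) (\<lambda>x1 x2.
          sw (pms sB) (comul x2) (\<lambda>p q. mtens sB (act x1 b * (act p 1 * act (mul q a1) 1)) (mul y a2)))"
        by (simp only: act_mult act_act1 sw_linear[OF l1] sw_linear[OF l2])
    qed
    show ?thesis by (simp only: E)
  qed
  also have "\<dots> = sw (pms sB) (comul (bas a)) (\<lambda>a1 a2. sw (pms sB) (comul h) (\<lambda>x y. sw (pms sB) (comul x) (\<lambda>w q.
      sw (pms sB) (comul w) (\<lambda>x1 p. mtens sB (act x1 b * (act p 1 * act (mul q a1) 1)) (mul y a2)))))"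
  proof -
    have E: "\<And>x a1 y a2. sw (pms sB) (comul x) (\<lambda>x1 x2.
      sw (pms sB) (comul x2) (\<lambda>p q. mtens sB (act x1 b * (act p 1 * act (mul q a1) 1)) (mul y a2)))
      = sw (pms sB) (comul x) (\<lambda>w q. sw (pms sB) (comul w) (\<lambda>x1 p. mtens sB (act x1 b * (act p 1 * act (mul q a1) 1)) (mul y a2)))"
      by (rule coassoc[OF vsBH, symmetric])
    show ?thesis by (simp only: E)
  qed
  also have "\<dots> = sw (pms sB) (comul (bas a)) (\<lambda>a1 a2. sw (pms sB) (comul h) (\<lambda>x y. sw (pms sB) (comul x) (\<lambda>w q.
      mtens sB (act w b * act (mul q a1) 1) (mul y a2))))"
  proof -
    have E: "\<And>w q a1 y a2. sw (pms sB) (comul w) (\<lambda>x1 p. mtens sB (act x1 b * (act p 1 * act (mul q a1) 1)) (mul y a2))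
       = mtens sB (act w b * act (mul q a1) 1) (mul y a2)"
      using act_mult_lin[OF vsBH, where G="\<lambda>z. mtens sB (z * act (mul q a1) 1) (mul y a2)" and b=b and c=1 for q a1 y a2]
      by (simp add: mult.assoc linB)
    show ?thesis by (simp only: E)
  qed
  also have "\<dots> = sw (pms sB) (comul h) (\<lambda>x y. sw (pms sB) (comul (bas a)) (\<lambda>a1 a2. sw (pms sB) (comul x) (\<lambda>w q.
      mtens sB (act w b * act (mul q a1) 1) (mul y a2))))"
    by (rule sw_swap[OF vsBH])
  also have "\<dots> = sw (pms sB) (comul h) (\<lambda>x y. sw (pms sB) (comul x) (\<lambda>w q. sw (pms sB) (comul (bas a)) (\<lambda>a1 a2.
      mtens sB (act w b * act (mul q a1) 1) (mul y a2))))"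
  proof -
    have E: "\<And>x y. sw (pms sB) (comul (bas a)) (\<lambda>a1 a2. sw (pms sB) (comul x) (\<lambda>w q.
      mtens sB (act w b * act (mul q a1) 1) (mul y a2))) = sw (pms sB) (comul x) (\<lambda>w q. sw (pms sB) (comul (bas a)) (\<lambda>a1 a2.
      mtens sB (act w b * act (mul q a1) 1) (mul y a2)))"
      by (rule sw_swap[OF vsBH])
    show ?thesis by (simp only: E)
  qed
  finally show "Pm (BH_pi mul comul sB act h (Poly_Mapping.single a b)) = BH_pi mul comul sB act h (Pm (Poly_Mapping.single a b))"
    unfolding sm L by simp
qed

end

lemma subspace_sum':
  assumes "vector_space s" "module.subspace s V" "\<And>x. x \<in> A \<Longrightarrow> f x \<in> V" shows "sum f A \<in> V"
proof -
  interpret module s using assms(1) by (simp add: module_iff_vector_space)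
  show ?thesis using assms(2,3) by (rule subspace_sum)
qed

context hpa begin

lemma Pm_in_psmash: "Pm m \<in> psmash comul sB act"
  unfolding Pm_def sumt_def psmash_def
  by (intro subspace_sum'[OF vsBH subspace_span'[OF vsBH]] span_in[OF vsBH]) blast

lemma Pm_fix: "m \<in> psmash comul sB act \<Longrightarrow> Pm m = m"
  unfolding psmash_def
  by (rule span_fix_lin[OF vsBH Pm_lin]) (auto simp: psmash_elt_Pm Pm_idem)

definition Pb :: "('i \<Rightarrow> ('i \<Rightarrow>\<^sub>0 'B)) \<Rightarrow> ('i \<Rightarrow> ('i \<Rightarrow>\<^sub>0 'B))" where
  "Pb g = (\<lambda>l. Pm (g l))"

lemma Pb_lin: "lin (fsc (pms sB)) (fsc (pms sB)) Pb"
  unfolding Pb_def by (intro linI ext) (simp_all add: fsc_apply plus_fun_def lin_add[OF Pm_lin] lin_scale[OF Pm_lin])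

lemma Pb_hom_act: "Pb (hom_act mul (pms sB) h g) = hom_act mul (pms sB) h (Pb g)"
  unfolding Pb_def hom_act_def hom_ev_def by (simp add: lin_sum[OF Pm_lin] lin_scale[OF Pm_lin])

lemma Pb_dil: "Pb (dil_phi (BH_pi mul comul sB act) m) = dil_phi (BH_pi mul comul sB act) (Pm m)"
  unfolding Pb_def dil_phi_def by (simp add: Pm_BH)

lemma Pb_idem: "Pb (Pb g) = Pb g"
  unfolding Pb_def by (simp add: Pm_idem)

lemma D_sub: "vector_space sc \<Longrightarrow> module.subspace (fsc sc) (std_dilation mul sc \<pi> M)"
  unfolding std_dilation_def by (rule subspace_span'[OF vs_fsc])

lemma D_hst:
  assumes vs: "vector_space sc" and x: "x \<in> std_dilation mul sc \<pi> M"
  shows "hom_act mul sc h x \<in> std_dilation mul sc \<pi> M"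
  using x unfolding std_dilation_def
proof (rule span_image_lin[OF vs_fsc[OF vs] vs_fsc[OF vs] hom_act_lin_f[OF vs]])
  show "module.subspace (fsc sc) (module.span (fsc sc) {hom_act mul sc h (dil_phi \<pi> m) |h m. m \<in> M})"
    by (rule subspace_span'[OF vs_fsc[OF vs]])
  fix g assume "g \<in> {hom_act mul sc h (dil_phi \<pi> m) |h m. m \<in> M}"
  then obtain h' m where "g = hom_act mul sc h' (dil_phi \<pi> m)" "m \<in> M" by blast
  then show "hom_act mul sc h g \<in> module.span (fsc sc) {hom_act mul sc h (dil_phi \<pi> m) |h m. m \<in> M}"
    by (intro span_in[OF vs_fsc[OF vs]]) (auto simp: hom_act_comp[OF vs])
qed

lemma D_gen: "vector_space sc \<Longrightarrow> m \<in> M \<Longrightarrow> hom_act mul sc h (dil_phi \<pi> m) \<in> std_dilation mul sc \<pi> M"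
  unfolding std_dilation_def by (rule span_in[OF vs_fsc]) auto

lemma D_mono: assumes "vector_space sc" "M \<subseteq> M'" shows "std_dilation mul sc \<pi> M \<subseteq> std_dilation mul sc \<pi> M'"
proof -
  interpret module "fsc sc" using vs_fsc[OF assms(1)] by (simp add: module_iff_vector_space)
  show ?thesis unfolding std_dilation_def using assms(2) by (intro span_mono) auto
qed

abbreviation "BHp \<equiv> BH_pi mul comul sB act"
abbreviation "DD M \<equiv> std_dilation mul (pms sB) BHp M"

lemma Pb_D: "x \<in> DD UNIV \<Longrightarrow> Pb x \<in> DD (psmash comul sB act)"
  unfolding std_dilation_def[of _ _ _ UNIV]
proof (erule span_image_lin[OF vsHBH vsHBH Pb_lin])
  show "module.subspace (fsc (pms sB)) (DD (psmash comul sB act))" by (rule D_sub[OF vsBH])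
  fix g assume "g \<in> {hom_act mul (pms sB) h (dil_phi BHp m) |h m. m \<in> UNIV}"
  then obtain h m where "g = hom_act mul (pms sB) h (dil_phi BHp m)" by blast
  then show "Pb g \<in> DD (psmash comul sB act)"
    by (simp add: Pb_hom_act Pb_dil D_gen[OF vsBH] Pm_in_psmash)
qed

lemma Pb_fixD: "x \<in> DD (psmash comul sB act) \<Longrightarrow> Pb x = x"
  unfolding std_dilation_def
  by (erule span_fix_lin[OF vsHBH Pb_lin]) (auto simp: Pb_hom_act Pb_dil Pm_fix)

lemma smashB_sub: "module.subspace (pms (fsc sB)) (smashB mul sB act)"
  unfolding smashB_def by (rule subspace_span'[OF vsSM])

lemma smashB_gen: "f \<in> globB mul sB act \<Longrightarrow> mtens (fsc sB) f k \<in> smashB mul sB act"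
  unfolding smashB_def by (rule span_in[OF vsSM]) auto

lemma smash_hst: assumes t: "t \<in> smashB mul sB act" shows "smash_act mul comul sB h t \<in> smashB mul sB act"
proof (rule span_image_lin[OF vsSM vsSM smash_act_lin t[unfolded smashB_def]])
  show "module.subspace (pms (fsc sB)) (smashB mul sB act)" by (rule smashB_sub)
  fix g :: "'i \<Rightarrow>\<^sub>0 ('i \<Rightarrow> 'B)" assume "g \<in> {mtens (fsc sB) f k |f k. f \<in> globB mul sB act}"
  then obtain f k where g: "g = mtens (fsc sB) f k" and f: "f \<in> globB mul sB act" by blast
  show "smash_act mul comul sB h g \<in> smashB mul sB act"
    unfolding g smash_act_mtens
    by (rule sw_in_subspace[OF vsSM smashB_sub]) (intro smashB_gen, unfold globB_def, rule D_hst[OF vsB], fact f[unfolded globB_def])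
qed

lemma Fm_dil: "Fm (mtens (fsc sB) (dil_phi act b) k) = dil_phi BHp (mtens sB b k)"
proof (rule ext)
  fix l
  have "Fm (mtens (fsc sB) (dil_phi act b) k) l = sw (pms sB) (comul (bas l)) (\<lambda>x y. mtens sB (act x b) (mul y k))"
    unfolding Fm_def Fk_mtens by (simp only: hev_dil[OF vsB act_lin1])
  also have "\<dots> = dil_phi BHp (mtens sB b k) l"
    unfolding dil_phi_def BH_pi_mtens ..
  finally show "Fm (mtens (fsc sB) (dil_phi act b) k) l = dil_phi BHp (mtens sB b k) l" .
qed

lemma ID1: "mtens (fsc sB) (hom_act mul sB h f) k
   = sw (pms (fsc sB)) (comul h) (\<lambda>x y. smash_act mul comul sB x (mtens (fsc sB) f (mul (S y) k)))"
proof -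
  have "sw (pms (fsc sB)) (comul h) (\<lambda>x y. smash_act mul comul sB x (mtens (fsc sB) f (mul (S y) k)))
     = sw (pms (fsc sB)) (comul h) (\<lambda>x y. sw (pms (fsc sB)) (comul x) (\<lambda>u v. mtens (fsc sB) (hom_act mul sB u f) (mul v (mul (S y) k))))"
    by (simp only: smash_act_mtens)
  also have "\<dots> = sw (pms (fsc sB)) (comul h) (\<lambda>x y. sw (pms (fsc sB)) (comul y) (\<lambda>u v. mtens (fsc sB) (hom_act mul sB x f) (mul u (mul (S v) k))))"
    by (rule coassoc[OF vsSM])
  also have "\<dots> = sw (pms (fsc sB)) (comul h) (\<lambda>x y. pms (fsc sB) (eps y) (mtens (fsc sB) (hom_act mul sB x f) k))"
  proof -
    have E: "\<And>x y. sw (pms (fsc sB)) (comul y) (\<lambda>u v. mtens (fsc sB) (hom_act mul sB x f) (mul u (mul (S v) k)))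
      = pms (fsc sB) (eps y) (mtens (fsc sB) (hom_act mul sB x f) k)"
      using antipode_r[OF vsSM, where G="\<lambda>z. mtens (fsc sB) (hom_act mul sB x f) (mul z k)" for x]
      by (simp add: mul_assoc lin_mtensR[OF vsHB] lin_mulLg lin_id)
    show ?thesis by (simp only: E)
  qed
  also have "\<dots> = mtens (fsc sB) (hom_act mul sB h f) k"
    by (rule counit_r[OF vsSM, where G="\<lambda>x. mtens (fsc sB) (hom_act mul sB x f) k"])
       (rule lin_comp[OF hom_act_lin_h[OF vsB] mtens_lin_m[OF vsHB]])
  finally show ?thesis by simp
qed

lemma Fm_smashB: assumes t: "t \<in> smashB mul sB act" shows "Fm t \<in> DD UNIV"
proof (rule span_image_lin[OF vsSM vsHBH Fm_lin t[unfolded smashB_def]])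
  show "module.subspace (fsc (pms sB)) (DD UNIV)" by (rule D_sub[OF vsBH])
  fix g :: "'i \<Rightarrow>\<^sub>0 ('i \<Rightarrow> 'B)" assume "g \<in> {mtens (fsc sB) f k |f k. f \<in> globB mul sB act}"
  then obtain f :: "'i \<Rightarrow> 'B" and k :: "'i \<Rightarrow>\<^sub>0 'k" where g: "g = mtens (fsc sB) f k" and f: "f \<in> globB mul sB act" by blast
  have "Fm (mtens (fsc sB) f k) \<in> DD UNIV"
    using f unfolding globB_def std_dilation_def[of _ sB]
  proof (rule span_image_lin[OF vsHB vsHBH lin_comp[OF mtens_lin_m[OF vsHB] Fm_lin]])
    show "module.subspace (fsc (pms sB)) (DD UNIV)" by (rule D_sub[OF vsBH])
    fix f' assume "f' \<in> {hom_act mul sB h (dil_phi act m) |h m. m \<in> UNIV}"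
    then obtain h :: "'i \<Rightarrow>\<^sub>0 'k" and b :: 'B where f': "f' = hom_act mul sB h (dil_phi act b)" by blast
    show "Fm (mtens (fsc sB) f' k) \<in> DD UNIV"
      unfolding f' ID1
      by (simp only: sw_linear[OF Fm_lin] Fm_smash Fm_dil)
         (rule sw_in_subspace[OF vsHBH D_sub[OF vsBH]], rule D_gen[OF vsBH], simp)
  qed
  then show "Fm g \<in> DD UNIV" unfolding g .
qed

end

context hpa begin

lemma dil_lin: "lin (pms sB) (fsc (pms sB)) (dil_phi BHp)"
  unfolding dil_phi_def by (intro linI ext) (simp_all add: fsc_apply plus_fun_def lin_add[OF BH_pi_lin] lin_scale[OF BH_pi_lin])

lemma dilB_glob: "dil_phi act b \<in> globB mul sB act"
  using D_gen[OF vsB, of b UNIV one act] unfolding globB_def by (simp add: hom_act_one[OF vsB])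

lemma dil_in_F: "\<exists>t\<in>smashB mul sB act. Fm t = dil_phi BHp m"
proof (intro bexI)
  let ?t = "\<Sum>a\<in>Poly_Mapping.keys m. mtens (fsc sB) (dil_phi act (Poly_Mapping.lookup m a)) (bas a)"
  show "?t \<in> smashB mul sB act"
    by (intro subspace_sum'[OF vsSM smashB_sub] smashB_gen dilB_glob)
  have "Fm ?t = (\<Sum>a\<in>Poly_Mapping.keys m. dil_phi BHp (Poly_Mapping.single a (Poly_Mapping.lookup m a)))"
    by (simp add: lin_sum[OF Fm_lin] Fm_dil mtens_bas[OF vsB])
  also have "\<dots> = dil_phi BHp (\<Sum>a\<in>Poly_Mapping.keys m. Poly_Mapping.single a (Poly_Mapping.lookup m a))"
    by (simp add: lin_sum[OF dil_lin])
  also have "\<dots> = dil_phi BHp m" by (simp only: expand_pm[symmetric])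
  finally show "Fm ?t = dil_phi BHp m" .
qed

lemma Im_sub: "module.subspace (fsc (pms sB)) (Fm ` smashB mul sB act)"
proof -
  interpret m1: module "pms (fsc sB)" using vsSM by (simp add: module_iff_vector_space)
  interpret m2: module "fsc (pms sB)" using vsHBH by (simp add: module_iff_vector_space)
  show ?thesis
  proof (rule m2.subspaceI)
    show "0 \<in> Fm ` smashB mul sB act"
      using m1.subspace_0[OF smashB_sub] lin_zero[OF Fm_lin] by (metis image_eqI)
  next
    fix x y assume "x \<in> Fm ` smashB mul sB act" "y \<in> Fm ` smashB mul sB act"
    then obtain s t where "s \<in> smashB mul sB act" "t \<in> smashB mul sB act" "x = Fm s" "y = Fm t" by blast
    then show "x + y \<in> Fm ` smashB mul sB act"
      using m1.subspace_add[OF smashB_sub] lin_add[OF Fm_lin] by (metis image_eqI)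
  next
    fix c x assume "x \<in> Fm ` smashB mul sB act"
    then obtain s where "s \<in> smashB mul sB act" "x = Fm s" by blast
    then show "fsc (pms sB) c x \<in> Fm ` smashB mul sB act"
      using m1.subspace_scale[OF smashB_sub] lin_scale[OF Fm_lin] by (metis image_eqI)
  qed
qed

lemma Dps_in_Im: assumes x: "x \<in> DD (psmash comul sB act)" shows "x \<in> Fm ` smashB mul sB act"
proof -
  have "(\<lambda>x. x) x \<in> Fm ` smashB mul sB act"
  proof (rule span_image_lin[OF vsHBH vsHBH lin_id x[unfolded std_dilation_def] _ Im_sub])
    fix g assume "g \<in> {hom_act mul (pms sB) h (dil_phi BHp m) |h m. m \<in> psmash comul sB act}"
    then obtain h m where g: "g = hom_act mul (pms sB) h (dil_phi BHp m)" by blast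
    obtain t where t: "t \<in> smashB mul sB act" "Fm t = dil_phi BHp m" using dil_in_F by blast
    have "g = Fm (smash_act mul comul sB h t)" unfolding g Fm_smash t(2) ..
    then show "g \<in> Fm ` smashB mul sB act" using smash_hst[OF t(1)] by blast
  qed
  then show ?thesis by simp
qed

end

context hpa begin

lemma main_loc:
  "\<exists>N N' (\<Phi> :: ('i \<Rightarrow> ('i \<Rightarrow>\<^sub>0 'B)) \<Rightarrow> ('i \<Rightarrow>\<^sub>0 ('i \<Rightarrow> 'B))).
           h_submodule (pms (fsc sB)) (smash_act mul comul sB) N \<and>
           h_submodule (pms (fsc sB)) (smash_act mul comul sB) N' \<and>
           N \<subseteq> smashB mul sB act \<and> N' \<subseteq> smashB mul sB act \<and>
           N \<inter> N' = {0} \<and>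
           (\<forall>t\<in>smashB mul sB act. \<exists>n\<in>N. \<exists>n'\<in>N'. t = n + n') \<and>
           (\<forall>x\<in>std_dilation mul (pms sB) (BH_pi mul comul sB act) (psmash comul sB act).
              \<forall>y\<in>std_dilation mul (pms sB) (BH_pi mul comul sB act) (psmash comul sB act).
                \<Phi> (x + y) = \<Phi> x + \<Phi> y) \<and>
           (\<forall>c. \<forall>x\<in>std_dilation mul (pms sB) (BH_pi mul comul sB act) (psmash comul sB act).
                \<Phi> (fsc (pms sB) c x) = pms (fsc sB) c (\<Phi> x)) \<and>
           (\<forall>h. \<forall>x\<in>std_dilation mul (pms sB) (BH_pi mul comul sB act) (psmash comul sB act).
                \<Phi> (hom_act mul (pms sB) h x) = smash_act mul comul sB h (\<Phi> x)) \<and>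
           bij_betw \<Phi> (std_dilation mul (pms sB) (BH_pi mul comul sB act) (psmash comul sB act)) N"
proof -
  interpret m1: module "pms (fsc sB)" using vsSM by (simp add: module_iff_vector_space)
  interpret m2: module "fsc (pms sB)" using vsHBH by (simp add: module_iff_vector_space)
  let ?SB = "smashB mul sB act"
  let ?D = "DD (psmash comul sB act)"
  define N where "N = {t \<in> ?SB. Fm t \<in> ?D}"
  define N' where "N' = {t \<in> ?SB. Pb (Fm t) = 0}"
  define \<Phi> where "\<Phi> = inv_into N Fm"
  have SBs: "m1.subspace ?SB" by (rule smashB_sub)
  have Ds: "m2.subspace ?D" by (rule D_sub[OF vsBH])
  have inj: "inj_on Fm A" for A by (rule inj_onI) (rule Fm_inj)
  have hN: "h_submodule (pms (fsc sB)) (smash_act mul comul sB) N"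
    unfolding h_submodule_def
  proof (intro conjI allI ballI m1.subspaceI)
    show "0 \<in> N" unfolding N_def
      using m1.subspace_0[OF SBs] m2.subspace_0[OF Ds] lin_zero[OF Fm_lin] by simp
    fix x y assume "x \<in> N" "y \<in> N"
    then show "x + y \<in> N" unfolding N_def
      using m1.subspace_add[OF SBs] m2.subspace_add[OF Ds] lin_add[OF Fm_lin] by simp
  next
    fix c x assume "x \<in> N"
    then show "pms (fsc sB) c x \<in> N" unfolding N_def
      using m1.subspace_scale[OF SBs] m2.subspace_scale[OF Ds] lin_scale[OF Fm_lin] by simp
  next
    fix h x assume "x \<in> N"
    then show "smash_act mul comul sB h x \<in> N" unfolding N_def
      by (auto intro: D_hst[OF vsBH] smash_hst simp: Fm_smash)
  qed
  have hN': "h_submodule (pms (fsc sB)) (smash_act mul comul sB) N'"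
    unfolding h_submodule_def
  proof (intro conjI allI ballI m1.subspaceI)
    show "0 \<in> N'" unfolding N'_def
      using m1.subspace_0[OF SBs] lin_zero[OF Fm_lin] lin_zero[OF Pb_lin] by simp
    fix x y assume "x \<in> N'" "y \<in> N'"
    then show "x + y \<in> N'" unfolding N'_def
      using m1.subspace_add[OF SBs] lin_add[OF Fm_lin] lin_add[OF Pb_lin] by simp
  next
    fix c x assume "x \<in> N'"
    then show "pms (fsc sB) c x \<in> N'" unfolding N'_def
      using m1.subspace_scale[OF SBs] lin_scale[OF Fm_lin] lin_scale[OF Pb_lin] m2.scale_zero_right by simp
  next
    fix h x assume "x \<in> N'"
    then show "smash_act mul comul sB h x \<in> N'" unfolding N'_def
      using smash_hst Fm_smash Pb_hom_act lin_zero[OF hom_act_lin_f[OF vsBH]] by simp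
  qed
  have sub1: "N \<subseteq> ?SB" "N' \<subseteq> ?SB" unfolding N_def N'_def by auto
  have int: "N \<inter> N' = {0}"
  proof
    show "N \<inter> N' \<subseteq> {0}"
    proof
      fix t assume "t \<in> N \<inter> N'"
      then have "Fm t \<in> ?D" "Pb (Fm t) = 0" unfolding N_def N'_def by auto
      then have "Fm t = Fm 0" using Pb_fixD lin_zero[OF Fm_lin] by metis
      then show "t \<in> {0}" using Fm_inj by simp
    qed
    show "{0} \<subseteq> N \<inter> N'"
      using hN hN' unfolding h_submodule_def by (auto intro: m1.subspace_0)
  qed
  have dec: "\<forall>t\<in>?SB. \<exists>n\<in>N. \<exists>n'\<in>N'. t = n + n'"
  proof
    fix t assume t: "t \<in> ?SB"
    have PD: "Pb (Fm t) \<in> ?D" by (rule Pb_D[OF Fm_smashB[OF t]])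
    obtain n where n: "n \<in> ?SB" "Fm n = Pb (Fm t)"
      using imageE[OF Dps_in_Im[OF PD]] by metis
    have nN: "n \<in> N" unfolding N_def using n PD by simp
    have "t - n \<in> N'" unfolding N'_def
      using m1.subspace_diff[OF SBs t n(1)] lin_diff[OF Fm_lin] lin_diff[OF Pb_lin] n(2) Pb_idem by simp
    then show "\<exists>n\<in>N. \<exists>n'\<in>N'. t = n + n'" using nN by (intro bexI[of _ n] bexI[of _ "t - n"]) auto
  qed
  have img: "Fm ` N = ?D"
  proof
    show "Fm ` N \<subseteq> ?D" unfolding N_def by auto
    show "?D \<subseteq> Fm ` N"
    proof
      fix x assume x: "x \<in> ?D"
      obtain t where "t \<in> ?SB" "x = Fm t" using imageE[OF Dps_in_Im[OF x]] by metis
      then show "x \<in> Fm ` N" unfolding N_def using x by auto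
    qed
  qed
  have bij: "bij_betw \<Phi> ?D N"
    unfolding \<Phi>_def img[symmetric] by (rule bij_betw_inv_into[OF inj_on_imp_bij_betw[OF inj]])
  have PhiN: "\<And>x. x \<in> ?D \<Longrightarrow> \<Phi> x \<in> N" unfolding \<Phi>_def img[symmetric] by (rule inv_into_into)
  have FPhi: "\<And>x. x \<in> ?D \<Longrightarrow> Fm (\<Phi> x) = x" unfolding \<Phi>_def img[symmetric] by (rule f_inv_into_f)
  have Phi_eq: "\<And>x t. t \<in> N \<Longrightarrow> Fm t = x \<Longrightarrow> \<Phi> x = t" unfolding \<Phi>_def by (rule inv_into_f_eq[OF inj])
  have add: "\<forall>x\<in>?D. \<forall>y\<in>?D. \<Phi> (x + y) = \<Phi> x + \<Phi> y"
  proof (intro ballI)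
    fix x y assume "x \<in> ?D" "y \<in> ?D"
    then show "\<Phi> (x + y) = \<Phi> x + \<Phi> y"
      using hN PhiN FPhi lin_add[OF Fm_lin] unfolding h_submodule_def
      by (intro Phi_eq) (auto intro: m1.subspace_add)
  qed
  have scl: "\<forall>c. \<forall>x\<in>?D. \<Phi> (fsc (pms sB) c x) = pms (fsc sB) c (\<Phi> x)"
  proof (intro allI ballI)
    fix c x assume "x \<in> ?D"
    then show "\<Phi> (fsc (pms sB) c x) = pms (fsc sB) c (\<Phi> x)"
      using hN PhiN FPhi lin_scale[OF Fm_lin] unfolding h_submodule_def
      by (intro Phi_eq) (auto intro: m1.subspace_scale)
  qed
  have hl: "\<forall>h. \<forall>x\<in>?D. \<Phi> (hom_act mul (pms sB) h x) = smash_act mul comul sB h (\<Phi> x)"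
  proof (intro allI ballI)
    fix h x assume "x \<in> ?D"
    then show "\<Phi> (hom_act mul (pms sB) h x) = smash_act mul comul sB h (\<Phi> x)"
      using hN PhiN FPhi Fm_smash unfolding h_submodule_def
      by (intro Phi_eq) auto
  qed
  show ?thesis
    by (intro exI[of _ N] exI[of _ N'] exI[of _ \<Phi>] conjI hN hN' sub1 int dec add scl hl bij)
qed

end

theorem mainTheorem17:
  fixes mul :: "('i \<Rightarrow>\<^sub>0 'k::field) \<Rightarrow> ('i \<Rightarrow>\<^sub>0 'k) \<Rightarrow> ('i \<Rightarrow>\<^sub>0 'k)"
    and one :: "'i \<Rightarrow>\<^sub>0 'k"
    and comul :: "('i \<Rightarrow>\<^sub>0 'k) \<Rightarrow> ('i \<times> 'i) \<Rightarrow>\<^sub>0 'k"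
    and eps :: "('i \<Rightarrow>\<^sub>0 'k) \<Rightarrow> 'k"
    and S :: "('i \<Rightarrow>\<^sub>0 'k) \<Rightarrow> ('i \<Rightarrow>\<^sub>0 'k)"
    and sB :: "'k \<Rightarrow> 'B::ring_1 \<Rightarrow> 'B"
    and act :: "('i \<Rightarrow>\<^sub>0 'k) \<Rightarrow> 'B \<Rightarrow> 'B"
  assumes "hopf_algebra mul one comul eps S"
    and "k_algebra sB"
    and "sym_partial_action mul one comul sB act"
  shows "\<exists>N N' (\<Phi> :: ('i \<Rightarrow> ('i \<Rightarrow>\<^sub>0 'B)) \<Rightarrow> ('i \<Rightarrow>\<^sub>0 ('i \<Rightarrow> 'B))).
           h_submodule (pms (fsc sB)) (smash_act mul comul sB) N \<and>
           h_submodule (pms (fsc sB)) (smash_act mul comul sB) N' \<and>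
           N \<subseteq> smashB mul sB act \<and> N' \<subseteq> smashB mul sB act \<and>
           N \<inter> N' = {0} \<and>
           (\<forall>t\<in>smashB mul sB act. \<exists>n\<in>N. \<exists>n'\<in>N'. t = n + n') \<and>
           (\<forall>x\<in>std_dilation mul (pms sB) (BH_pi mul comul sB act) (psmash comul sB act).
              \<forall>y\<in>std_dilation mul (pms sB) (BH_pi mul comul sB act) (psmash comul sB act).
                \<Phi> (x + y) = \<Phi> x + \<Phi> y) \<and>
           (\<forall>c. \<forall>x\<in>std_dilation mul (pms sB) (BH_pi mul comul sB act) (psmash comul sB act).
                \<Phi> (fsc (pms sB) c x) = pms (fsc sB) c (\<Phi> x)) \<and>
           (\<forall>h. \<forall>x\<in>std_dilation mul (pms sB) (BH_pi mul comul sB act) (psmash comul sB act).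
                \<Phi> (hom_act mul (pms sB) h x) = smash_act mul comul sB h (\<Phi> x)) \<and>
           bij_betw \<Phi> (std_dilation mul (pms sB) (BH_pi mul comul sB act) (psmash comul sB act)) N"
proof -
  interpret hpa mul one comul eps S sB act
    by (intro hpa.intro hopf.intro hpa_axioms.intro assms)
  show ?thesis by (rule main_loc)
qed

end
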